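(* Let $\xi=(\xi_1,\xi_2)\in\mathfrak{so}(n)\times\mathfrak{so}(k)$ and $X\in\mathrm{St}(n,k)$. For $t\in I$ let $$\alpha(t)=\int_0^t\exp\!\big(s(\mathrm{ad}_{\xi_{\mathfrak h}}+\tfrac12\,\mathrm{pr}_{\mathfrak p}\circ\mathrm{ad}_{\xi_{\mathfrak p}})\big)(\xi_{\mathfrak p})\,ds,\quad q(t)=\exp(t\xi)\exp(-t\xi_{\mathfrak h})=(e^{t\xi_1}e^{-t\xi_{1,\mathfrak h}},e^{t\xi_2}e^{-t\xi_{2,\mathfrak h}}),$$ $$S(t)=\mathrm{Ad}_{\exp(t\xi_{\mathfrak h})}\circ\exp\!\big(-t(\mathrm{ad}_{\xi_{\mathfrak h}}+\tfrac12\,\mathrm{pr}_{\mathfrak p}\circ\mathrm{ad}_{\xi_{\mathfrak p}})\big),\quad A(t)=d_{q(t)}\pi\circ d_{(I_n,I_k)}L_{q(t)}\circ S(t),$$ $$T(t)=\Phi_{\exp(t\xi_{\mathfrak h})}\circ\exp\!\big(-t\,P_X^\perp\circ f_{(\xi_1,\xi_2)}\big)\colon N_X\mathrm{St}(n,k)\to N_X\mathrm{St}(n,k).$$ Set $\beta(t)=d_{(I_n,I_k)}(\iota_X\circ\pi)(\alpha(t))$, $\widehat\beta(t)=\iota_X(\pi(\exp(t\xi)))=e^{t\xi_1}Xe^{-t\xi_2}$, $B(t)=d_{\pi(\exp(t\xi))}\iota_X\circ A(t)\circ\big(d_{(I_n,I_k)}(\iota_X\circ\pi)|_{\mathfrak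 p}\big)^{-1}$ and $C(t)=\Phi_{q(t)}\circ T(t)$. Then $(\beta(t),\widehat\beta(t),B(t),C(t))$ is an extrinsic rolling of $T_X\mathrm{St}(n,k)$ over $\mathrm{St}(n,k)$ with respect to the Euclidean metric.
   Context: $\mathrm{St}(n,k)=\{Y\in\mathbb{R}^{n\times k}:Y^\top Y=I_k\}$ with metric $\langle V,W\rangle=2\operatorname{tr}(V^\top W)$ ("Euclidean metric"). $G=O(n)\times O(k)$ acts on $\mathbb{R}^{n\times k}$ by $\Phi_{(R,\theta)}(V)=RV\theta^\top$; $H$ is the stabilizer of $X$, $\pi\colon G\to G/H$, $\iota_X\colon G/H\to\mathrm{St}(n,k)$, $(R,\theta)H\mapsto RX\theta^\top$; $L_g$ left translation. $\mathfrak g=\mathfrak{so}(n)\times\mathfrak{so}(k)$ with scalar product $\langle(\Omega_1,\Psi_1),(\Omega_2,\Psi_2)\rangle=-\operatorname{tr}(\Omega_1\Omega_2)+2\operatorname{tr}(\Psi_1\Psi_2)$, $\mathfrak h=\{(\Omega,\eta):\Omega X=X\eta\}$, $\mathfrak p=\mathfrak h^\perp$, $\mathrm{pr}_{\mathfrak p}(\Omega,\eta)=(XX^\top\Omega+\Omega XX^\top-2X\eta X^\top,\,X^\top\Omega X-\eta)$, and $\xi_{\mathfrak h}=(\xi_{1,\mathfrak h},\xi_{2,\mathfrak h})$, $\xi_{\mathfrak p}$ the components of $\xi$ in $\mathfrak g=\mathfrak h\oplus\mathfrak p$. $G/H$ carries the $G$-invariant metric making $\pi$ a pseudo-Riemannian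 submersion; $d_{(I_n,I_k)}(\iota_X\circ\pi)|_{\mathfrak p}\colon\mathfrak p\to T_X\mathrm{St}(n,k)$, $(\Omega,\eta)\mapsto\Omega X-X\eta$, is a linear isometry with inverse $V\mapsto(VX^\top-XV^\top,X^\top V)$. $T_Y\mathrm{St}(n,k)=\{V:Y^\top V+V^\top Y=0\}$, $N_Y\mathrm{St}(n,k)$ its Frobenius-orthogonal complement, $P_X^\perp(V)=\tfrac12X(X^\top V+V^\top X)$, $f_{(\xi_1,\xi_2)}(V)=\xi_1V-V\xi_2$. The subspace $T_X\mathrm{St}(n,k)$ is viewed as a submanifold with tangent space $T_X\mathrm{St}(n,k)$ and normal space $N_X\mathrm{St}(n,k)$ everywhere. An extrinsic rolling of $M$ over $\widehat M$ is a quadruple of curves $\alpha$ in $M$, $\widehat\alpha$ in $\widehat M$ and linear isometries $A(t)\colon T_{\alpha(t)}M\to T_{\widehat\alpha(t)}\widehat M$, $C(t)\colon N_{\alpha(t)}M\to N_{\widehat\alpha(t)}\widehat M$ with $\dot{\widehat\alpha}=A\dot\alpha$, $A(t)Z(t)$ parallel along $\widehat\alpha$ iff $Z$ parallel along $\alpha$, and $C(t)Z(t)$ normal parallel along $\widehat\alpha$ iff $Z$ normal parallel along $\alpha$ (normal parallel: the normal component of $\tfrac{d}{dt}Z$ vanishes). *)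

theory Defs
  imports "HOL-Analysis.Analysis"
begin

definition orth_proj :: "('v \<Rightarrow> 'v \<Rightarrow> real) \<Rightarrow> 'v::real_vector set \<Rightarrow> 'v \<Rightarrow> 'v" where
  "orth_proj g S v = (THE w. w \<in> S \<and> (\<forall>u\<in>S. g (v - w) u = 0))"

definition lin_isometry ::
  "('v \<Rightarrow> 'v \<Rightarrow> real) \<Rightarrow> 'v::real_vector set \<Rightarrow> 'v set \<Rightarrow> ('v \<Rightarrow> 'v) \<Rightarrow> bool" where
  "lin_isometry g S S' F \<longleftrightarrow>
     (\<forall>x\<in>S. \<forall>y\<in>S. \<forall>a b. F (a *\<^sub>R x + b *\<^sub>R y) = a *\<^sub>R F x + b *\<^sub>R F y) \<and>
     F ` S = S' \<and>
     (\<forall>x\<in>S. \<forall>y\<in>S. g (F x) (F y) = g x y)"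

text \<open>Z is a parallel tangent vector field along the curve c (defined on I) of a submanifold of
  Euclidean space with tangent spaces TM: Z is tangent, differentiable, and the tangential
  component of its derivative vanishes (Levi-Civita connection of the induced metric).\<close>
definition tangent_parallel ::
  "('v \<Rightarrow> 'v \<Rightarrow> real) \<Rightarrow> real set \<Rightarrow> ('v \<Rightarrow> 'v set) \<Rightarrow> (real \<Rightarrow> 'v) \<Rightarrow> (real \<Rightarrow> 'v::real_normed_vector) \<Rightarrow> bool" where
  "tangent_parallel g I TM c Z \<longleftrightarrow>
     (\<forall>t\<in>I. Z t \<in> TM (c t)) \<and>
     (\<forall>t\<in>I. \<exists>D. (Z has_vector_derivative D) (at t within I) \<and> orth_proj g (TM (c t)) D = 0)"

definition normal_parallel ::
  "('v \<Rightarrow> 'v \<Rightarrow> real) \<Rightarrow> real set \<Rightarrow> ('v \<Rightarrow> 'v set) \<Rightarrow> (real \<Rightarrow> 'v) \<Rightarrow> (real \<Rightarrow> 'v::real_normed_vector) \<Rightarrow> bool" where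
  "normal_parallel g I NM c Z \<longleftrightarrow>
     (\<forall>t\<in>I. Z t \<in> NM (c t)) \<and>
     (\<forall>t\<in>I. \<exists>D. (Z has_vector_derivative D) (at t within I) \<and> orth_proj g (NM (c t)) D = 0)"

definition extrinsic_rolling ::
  "('v \<Rightarrow> 'v \<Rightarrow> real) \<Rightarrow> real set \<Rightarrow>
   'v set \<Rightarrow> ('v \<Rightarrow> 'v set) \<Rightarrow> ('v \<Rightarrow> 'v set) \<Rightarrow>
   'v set \<Rightarrow> ('v \<Rightarrow> 'v set) \<Rightarrow> ('v \<Rightarrow> 'v set) \<Rightarrow>
   (real \<Rightarrow> 'v) \<Rightarrow> (real \<Rightarrow> 'v) \<Rightarrow> (real \<Rightarrow> 'v \<Rightarrow> 'v) \<Rightarrow> (real \<Rightarrow> 'v \<Rightarrow> 'v::real_normed_vector) \<Rightarrow> bool" where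
  "extrinsic_rolling g I M TM NM M' TM' NM' a a' A C \<longleftrightarrow>
     (\<forall>t\<in>I. a t \<in> M \<and> a' t \<in> M') \<and>
     (\<forall>t\<in>I. lin_isometry g (TM (a t)) (TM' (a' t)) (A t)) \<and>
     (\<forall>t\<in>I. lin_isometry g (NM (a t)) (NM' (a' t)) (C t)) \<and>
     (\<forall>t\<in>I. \<exists>v. (a has_vector_derivative v) (at t within I) \<and>
                 (a' has_vector_derivative A t v) (at t within I)) \<and>
     (\<forall>Z. (\<forall>t\<in>I. Z t \<in> TM (a t)) \<longrightarrow>
        (tangent_parallel g I TM' a' (\<lambda>t. A t (Z t)) \<longleftrightarrow> tangent_parallel g I TM a Z)) \<and>
     (\<forall>Z. (\<forall>t\<in>I. Z t \<in> NM (a t)) \<longrightarrow>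
        (normal_parallel g I NM' a' (\<lambda>t. C t (Z t)) \<longleftrightarrow> normal_parallel g I NM a Z))"

definition op_exp :: "('a \<Rightarrow> 'a) \<Rightarrow> 'a \<Rightarrow> 'a::real_normed_vector" where
  "op_exp L v = (\<Sum>m. (1 / fact m) *\<^sub>R (L ^^ m) v)"

definition mexp :: "real^'n^'n \<Rightarrow> real^'n^'n" where
  "mexp A = (\<Sum>m. (1 / fact m) *\<^sub>R ((\<lambda>M. A ** M) ^^ m) (mat 1))"

definition integral0 :: "real \<Rightarrow> (real \<Rightarrow> 'a::real_normed_vector) \<Rightarrow> 'a" where
  "integral0 t f = (if 0 \<le> t then integral {0..t} f else - integral {t..0} f)"

definition stiefel :: "(real^'k^'n) set" where
  "stiefel = {Y. transpose Y ** Y = mat 1}"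

definition stiefel_tangent :: "real^'k^'n \<Rightarrow> (real^'k^'n) set" where
  "stiefel_tangent Y = {V. transpose Y ** V + transpose V ** Y = 0}"

definition stiefel_normal :: "real^'k^'n \<Rightarrow> (real^'k^'n) set" where
  "stiefel_normal Y = {V. \<forall>W\<in>stiefel_tangent Y. trace (transpose V ** W) = 0}"

definition euclid_metric :: "real^'k^'n \<Rightarrow> real^'k^'n \<Rightarrow> real" where
  "euclid_metric V W = 2 * trace (transpose V ** W)"

type_synonym ('n,'k) lalg = "(real^'n^'n) \<times> (real^'k^'k)"

definition skew :: "real^'m^'m \<Rightarrow> bool" where
  "skew A \<longleftrightarrow> transpose A = - A"

definition lie_br :: "('n::finite,'k::finite) lalg \<Rightarrow> ('n,'k) lalg \<Rightarrow> ('n,'k) lalg" where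
  "lie_br x y = (fst x ** fst y - fst y ** fst x, snd x ** snd y - snd y ** snd x)"

definition ad :: "('n::finite,'k::finite) lalg \<Rightarrow> ('n,'k) lalg \<Rightarrow> ('n,'k) lalg" where
  "ad x = lie_br x"

definition Ad :: "('n::finite,'k::finite) lalg \<Rightarrow> ('n,'k) lalg \<Rightarrow> ('n,'k) lalg" where
  "Ad g y = (fst g ** fst y ** matrix_inv (fst g), snd g ** snd y ** matrix_inv (snd g))"

definition gexp :: "real \<Rightarrow> ('n::finite,'k::finite) lalg \<Rightarrow> ('n,'k) lalg" where
  "gexp t x = (mexp (t *\<^sub>R fst x), mexp (t *\<^sub>R snd x))"

definition Phi :: "('n::finite,'k::finite) lalg \<Rightarrow> real^'k^'n \<Rightarrow> real^'k^'n" where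
  "Phi g V = fst g ** V ** transpose (snd g)"

text \<open>Orthogonal projection of g onto p = h^perp (formula from the paper).\<close>
definition pr_p :: "real^'k^'n \<Rightarrow> ('n::finite,'k::finite) lalg \<Rightarrow> ('n,'k) lalg" where
  "pr_p X y = (X ** transpose X ** fst y + fst y ** X ** transpose X - 2 *\<^sub>R (X ** snd y ** transpose X),
               transpose X ** fst y ** X - snd y)"

definition xi_p :: "real^'k^'n \<Rightarrow> ('n::finite,'k::finite) lalg \<Rightarrow> ('n,'k) lalg" where
  "xi_p X xi = pr_p X xi"

definition xi_h :: "real^'k^'n \<Rightarrow> ('n::finite,'k::finite) lalg \<Rightarrow> ('n,'k) lalg" where
  "xi_h X xi = xi - xi_p X xi"

definition Lop :: "real^'k^'n \<Rightarrow> ('n::finite,'k::finite) lalg \<Rightarrow> ('n,'k) lalg \<Rightarrow> ('n,'k) lalg" where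
  "Lop X xi y = ad (xi_h X xi) y + (1/2) *\<^sub>R pr_p X (ad (xi_p X xi) y)"

text \<open>d_(I_n,I_k)(iota_X o pi) and the inverse of its restriction to p.\<close>
definition d_iota_pi :: "real^'k^'n \<Rightarrow> ('n::finite,'k::finite) lalg \<Rightarrow> real^'k^'n" where
  "d_iota_pi X y = fst y ** X - X ** snd y"

definition d_iota_pi_inv :: "real^'k^'n \<Rightarrow> real^'k^'n \<Rightarrow> ('n::finite,'k::finite) lalg" where
  "d_iota_pi_inv X V = (V ** transpose X - X ** transpose V, transpose X ** V)"

definition P_perp :: "real^'k^'n \<Rightarrow> real^'k^'n \<Rightarrow> real^'k^'n" where
  "P_perp X V = (1/2) *\<^sub>R (X ** (transpose X ** V + transpose V ** X))"

definition f_xi :: "('n::finite,'k::finite) lalg \<Rightarrow> real^'k^'n \<Rightarrow> real^'k^'n" where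
  "f_xi xi V = fst xi ** V - V ** snd xi"

definition roll_alpha :: "real^'k^'n \<Rightarrow> ('n::finite,'k::finite) lalg \<Rightarrow> real \<Rightarrow> ('n,'k) lalg" where
  "roll_alpha X xi t = integral0 t (\<lambda>s. op_exp (\<lambda>y. s *\<^sub>R Lop X xi y) (xi_p X xi))"

definition roll_q :: "real^'k^'n \<Rightarrow> ('n::finite,'k::finite) lalg \<Rightarrow> real \<Rightarrow> ('n,'k) lalg" where
  "roll_q X xi t = (mexp (t *\<^sub>R fst xi) ** mexp (- t *\<^sub>R fst (xi_h X xi)),
                    mexp (t *\<^sub>R snd xi) ** mexp (- t *\<^sub>R snd (xi_h X xi)))"

definition roll_S :: "real^'k^'n \<Rightarrow> ('n::finite,'k::finite) lalg \<Rightarrow> real \<Rightarrow> ('n,'k) lalg \<Rightarrow> ('n,'k) lalg" where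
  "roll_S X xi t = Ad (gexp t (xi_h X xi)) \<circ> op_exp (\<lambda>y. (- t) *\<^sub>R Lop X xi y)"

definition roll_T :: "real^'k^'n \<Rightarrow> ('n::finite,'k::finite) lalg \<Rightarrow> real \<Rightarrow> real^'k^'n \<Rightarrow> real^'k^'n" where
  "roll_T X xi t = Phi (gexp t (xi_h X xi)) \<circ> op_exp (\<lambda>V. (- t) *\<^sub>R P_perp X (f_xi xi V))"

definition roll_beta :: "real^'k^'n \<Rightarrow> ('n::finite,'k::finite) lalg \<Rightarrow> real \<Rightarrow> real^'k^'n" where
  "roll_beta X xi t = d_iota_pi X (roll_alpha X xi t)"

definition roll_beta_hat :: "real^'k^'n \<Rightarrow> ('n::finite,'k::finite) lalg \<Rightarrow> real \<Rightarrow> real^'k^'n" where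
  "roll_beta_hat X xi t = Phi (gexp t xi) X"

text \<open>B(t) = d iota o A(t) o (d(iota o pi)|_p)^{-1}, where
  d iota o d pi_q o d L_q = d_(I,I)(iota_X o pi o L_q) = Phi_q o d_(I,I)(iota_X o pi).\<close>
definition roll_B :: "real^'k^'n \<Rightarrow> ('n::finite,'k::finite) lalg \<Rightarrow> real \<Rightarrow> real^'k^'n \<Rightarrow> real^'k^'n" where
  "roll_B X xi t V = Phi (roll_q X xi t) (d_iota_pi X (roll_S X xi t (d_iota_pi_inv X V)))"

definition roll_C :: "real^'k^'n \<Rightarrow> ('n::finite,'k::finite) lalg \<Rightarrow> real \<Rightarrow> real^'k^'n \<Rightarrow> real^'k^'n" where
  "roll_C X xi t = Phi (roll_q X xi t) \<circ> roll_T X xi t"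

end

theory Submission
  imports Defs
begin

typedef (overloaded) ('a::euclidean_space) endo = "UNIV :: ('a \<Rightarrow>\<^sub>L 'a) set" by auto

lemma Rep_endo_eqI: "Rep_endo a = Rep_endo b \<Longrightarrow> a = b"
  by (simp add: Rep_endo_inject)

instantiation endo :: (euclidean_space) real_normed_algebra_1
begin
definition zero_endo_def: "0 = Abs_endo 0"
definition one_endo_def: "1 = Abs_endo id_blinfun"
definition plus_endo_def: "a + b = Abs_endo (Rep_endo a + Rep_endo b)"
definition minus_endo_def: "a - b = Abs_endo (Rep_endo a - Rep_endo b)"
definition uminus_endo_def: "- a = Abs_endo (- Rep_endo a)"
definition scaleR_endo_def: "r *\<^sub>R a = Abs_endo (r *\<^sub>R Rep_endo a)"
definition times_endo_def: "a * b = Abs_endo (Rep_endo a o\<^sub>L Rep_endo b)"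
definition norm_endo_def: "norm a = norm (Rep_endo a)"
definition dist_endo_def: "dist (a::'a endo) b = norm (a - b)"
definition sgn_endo_def: "sgn (a::'a endo) = inverse (norm a) *\<^sub>R a"
definition uniformity_endo_def:
  "(uniformity :: ('a endo \<times> 'a endo) filter) = (INF e\<in>{0 <..}. principal {(x, y). dist x y < e})"
definition open_endo_def:
  "open (S :: 'a endo set) = (\<forall>x\<in>S. \<forall>\<^sub>F (x', y) in uniformity. x' = x \<longrightarrow> y \<in> S)"

lemma Rep_endo_ops:
  "Rep_endo 0 = 0" "Rep_endo 1 = id_blinfun"
  "Rep_endo (a + b) = Rep_endo a + Rep_endo b"
  "Rep_endo (a - b) = Rep_endo a - Rep_endo b"
  "Rep_endo (- a) = - Rep_endo a"
  "Rep_endo (r *\<^sub>R a) = r *\<^sub>R Rep_endo a"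
  "Rep_endo (a * b) = Rep_endo a o\<^sub>L Rep_endo b"
  by (simp_all add: zero_endo_def one_endo_def plus_endo_def minus_endo_def uminus_endo_def
      scaleR_endo_def times_endo_def Abs_endo_inverse)

instance
proof
  fix a b c :: "'a endo" and r s :: real
  show "a + b + c = a + (b + c)" by (rule Rep_endo_eqI) (simp add: Rep_endo_ops algebra_simps)
  show "a + b = b + a" by (rule Rep_endo_eqI) (simp add: Rep_endo_ops algebra_simps)
  show "0 + a = a" by (rule Rep_endo_eqI) (simp add: Rep_endo_ops algebra_simps)
  show "- a + a = 0" by (rule Rep_endo_eqI) (simp add: Rep_endo_ops algebra_simps)
  show "a - b = a + - b" by (rule Rep_endo_eqI) (simp add: Rep_endo_ops algebra_simps)
  show "r *\<^sub>R (a + b) = r *\<^sub>R a + r *\<^sub>R b" by (rule Rep_endo_eqI) (simp add: Rep_endo_ops algebra_simps)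
  show "(r + s) *\<^sub>R a = r *\<^sub>R a + s *\<^sub>R a" by (rule Rep_endo_eqI) (simp add: Rep_endo_ops algebra_simps)
  show "r *\<^sub>R s *\<^sub>R a = (r * s) *\<^sub>R a" by (rule Rep_endo_eqI) (simp add: Rep_endo_ops algebra_simps)
  show "1 *\<^sub>R a = a" by (rule Rep_endo_eqI) (simp add: Rep_endo_ops algebra_simps)
  show "a * b * c = a * (b * c)" by (rule Rep_endo_eqI) (simp add: Rep_endo_ops blinfun_eqI)
  show "(a + b) * c = a * c + b * c" by (rule Rep_endo_eqI) (simp add: Rep_endo_ops blinfun_eqI blinfun.bilinear_simps)
  show "a * (b + c) = a * b + a * c" by (rule Rep_endo_eqI) (simp add: Rep_endo_ops blinfun_eqI blinfun.bilinear_simps)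
  show "r *\<^sub>R a * b = r *\<^sub>R (a * b)" by (rule Rep_endo_eqI) (simp add: Rep_endo_ops blinfun_eqI blinfun.bilinear_simps)
  show "a * r *\<^sub>R b = r *\<^sub>R (a * b)" by (rule Rep_endo_eqI) (simp add: Rep_endo_ops blinfun_eqI blinfun.bilinear_simps)
  show "1 * a = a" by (rule Rep_endo_eqI) (simp add: Rep_endo_ops blinfun_eqI)
  show "a * 1 = a" by (rule Rep_endo_eqI) (simp add: Rep_endo_ops blinfun_eqI)
  show "(0::'a endo) \<noteq> 1"
  proof
    assume "(0::'a endo) = 1"
    then have "Rep_endo (0::'a endo) = Rep_endo 1" by simp
    then have "(0 :: 'a \<Rightarrow>\<^sub>L 'a) = id_blinfun" by (simp add: Rep_endo_ops)
    then have "norm (0 :: 'a \<Rightarrow>\<^sub>L 'a) = norm (id_blinfun :: 'a \<Rightarrow>\<^sub>L 'a)" by simp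
    then show False by simp
  qed
  show "norm (1::'a endo) = 1" by (simp add: norm_endo_def Rep_endo_ops)
  show "norm (a * b) \<le> norm a * norm b" by (simp add: norm_endo_def Rep_endo_ops norm_blinfun_compose)
  show "dist a b = norm (a - b)" by (simp add: dist_endo_def)
  show "sgn a = inverse (norm a) *\<^sub>R a" by (simp add: sgn_endo_def)
  show "(uniformity :: ('a endo \<times> 'a endo) filter) = (INF e\<in>{0 <..}. principal {(x, y). dist x y < e})"
    by (simp add: uniformity_endo_def)
  fix U :: "'a endo set"
  show "open U = (\<forall>x\<in>U. \<forall>\<^sub>F (x', y) in uniformity. x' = x \<longrightarrow> y \<in> U)"
    by (simp add: open_endo_def)
next
  fix a b :: "'a endo" and r :: real
  show "(norm a = 0) = (a = 0)"
    by (metis Rep_endo_eqI Rep_endo_ops(1) norm_endo_def norm_eq_zero)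
  show "norm (a + b) \<le> norm a + norm b" by (simp add: norm_endo_def Rep_endo_ops norm_triangle_ineq)
  show "norm (r *\<^sub>R a) = \<bar>r\<bar> * norm a" by (simp add: norm_endo_def Rep_endo_ops)
qed
end

instance endo :: (euclidean_space) banach
proof
  fix X :: "nat \<Rightarrow> 'a endo"
  assume C: "Cauchy X"
  have dd: "dist (X m) (X n) = dist (Rep_endo (X m)) (Rep_endo (X n))" for m n
    by (simp add: dist_endo_def norm_endo_def Rep_endo_ops dist_norm)
  have "Cauchy (\<lambda>n. Rep_endo (X n))"
    using C unfolding Cauchy_def dd .
  then obtain l where l: "(\<lambda>n. Rep_endo (X n)) \<longlonglongrightarrow> l"
    using convergent_def Cauchy_convergent by blast
  have dd2: "dist (X n) (Abs_endo l) = dist (Rep_endo (X n)) l" for n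
    by (simp add: dist_endo_def norm_endo_def Rep_endo_ops dist_norm Abs_endo_inverse)
  have "X \<longlonglongrightarrow> Abs_endo l"
    using l unfolding lim_sequentially dd2 .
  then show "convergent X" by (auto simp: convergent_def)
qed



definition ev :: "'a::euclidean_space endo \<Rightarrow> 'a \<Rightarrow> 'a" where
  "ev a v = blinfun_apply (Rep_endo a) v"

definition mk :: "('a \<Rightarrow> 'a) \<Rightarrow> 'a::euclidean_space endo" where
  "mk L = Abs_endo (Blinfun L)"

lemma bounded_bilinear_ev: "bounded_bilinear ev"
proof
  fix a b :: "'a::euclidean_space endo" and x y :: 'a and r :: real
  show "ev (a + b) x = ev a x + ev b x" by (simp add: ev_def Rep_endo_ops blinfun.add_left)
  show "ev a (x + y) = ev a x + ev a y" by (simp add: ev_def blinfun.add_right)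
  show "ev (r *\<^sub>R a) x = r *\<^sub>R ev a x" by (simp add: ev_def Rep_endo_ops blinfun.scaleR_left)
  show "ev a (r *\<^sub>R x) = r *\<^sub>R ev a x" by (simp add: ev_def blinfun.scaleR_right)
  show "\<exists>K. \<forall>a x. norm (ev a x) \<le> norm a * norm x * K"
    by (rule exI[where x=1]) (simp add: ev_def norm_endo_def norm_blinfun)
qed

interpretation ev: bounded_bilinear ev by (rule bounded_bilinear_ev)

lemma ev_mk: "linear L \<Longrightarrow> ev (mk L) v = L v"
  by (simp add: ev_def mk_def Abs_endo_inverse bounded_linear_Blinfun_apply linear_conv_bounded_linear)

lemma ev_one[simp]: "ev 1 v = v" by (simp add: ev_def Rep_endo_ops)
lemma ev_mult: "ev (a * b) v = ev a (ev b v)" by (simp add: ev_def Rep_endo_ops)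
lemma ev_eqI: "(\<And>v. ev a v = ev b v) \<Longrightarrow> a = b"
  by (rule Rep_endo_eqI, rule blinfun_eqI) (simp add: ev_def)

lemma ev_power: "ev (a ^ m) v = ((ev a) ^^ m) v"
  by (induction m arbitrary: v) (simp_all add: ev_mult)

lemma linear_ev: "linear (ev a)"
  using ev.bounded_linear_right bounded_linear.linear by blast

lemma lin_sc: "linear L \<Longrightarrow> linear (\<lambda>y. s *\<^sub>R L y)"
  by (rule linearI) (simp_all add: linear_add linear_scale scaleR_add_right)

lemma mk_scale: "linear L \<Longrightarrow> mk (\<lambda>y. s *\<^sub>R L y) = s *\<^sub>R mk L"
proof (rule ev_eqI)
  fix v assume "linear L"
  then have "linear (\<lambda>y. s *\<^sub>R L y)" by (rule lin_sc)
  then show "ev (mk (\<lambda>y. s *\<^sub>R L y)) v = ev (s *\<^sub>R mk L) v"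
    using \<open>linear L\<close> by (simp add: ev_mk ev.scaleR_left)
qed

lemma ev_exp_sums:
  assumes "linear L"
  shows "(\<lambda>m. (1 / fact m) *\<^sub>R (L ^^ m) v) sums ev (exp (mk L)) v"
proof -
  have s: "(\<lambda>n. (mk L) ^ n /\<^sub>R fact n) sums exp (mk L)"
    unfolding exp_def by (rule summable_sums[OF summable_exp_generic])
  have "(\<lambda>n. ev ((mk L) ^ n /\<^sub>R fact n) v) sums ev (exp (mk L)) v"
    by (rule bounded_linear.sums[OF ev.bounded_linear_left s])
  moreover have "ev ((mk L) ^ n /\<^sub>R fact n) v = (1 / fact n) *\<^sub>R (L ^^ n) v" for n
  proof -
    have e: "ev (mk L) = L" using assms by (simp add: ev_mk fun_eq_iff)
    show ?thesis by (simp add: ev.scaleR_left ev_power e divide_inverse)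
  qed
  ultimately show ?thesis by simp
qed

lemma op_exp_ev: "linear L \<Longrightarrow> op_exp L v = ev (exp (mk L)) v"
  unfolding op_exp_def by (rule sums_unique[OF ev_exp_sums, symmetric])

lemma op_exp_scaled: "linear L \<Longrightarrow> op_exp (\<lambda>y. s *\<^sub>R L y) v = ev (exp (s *\<^sub>R mk L)) v"
proof -
  assume l: "linear L"
  then have "linear (\<lambda>y. s *\<^sub>R L y)" by (rule lin_sc)
  then show ?thesis using l by (simp add: op_exp_ev mk_scale)
qed

lemma exp_intertwine:
  fixes L :: "'a::euclidean_space \<Rightarrow> 'a" and K :: "'b::euclidean_space \<Rightarrow> 'b"
  assumes "linear L" "linear K" "bounded_linear T" "\<And>v. T (L v) = K (T v)"
  shows "T (ev (exp (mk L)) v) = ev (exp (mk K)) (T v)"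
proof -
  have p: "T ((L ^^ m) v) = (K ^^ m) (T v)" for m
    by (induction m) (simp_all add: assms(4))
  have "(\<lambda>m. T ((1 / fact m) *\<^sub>R (L ^^ m) v)) sums T (ev (exp (mk L)) v)"
    by (rule bounded_linear.sums[OF assms(3) ev_exp_sums[OF assms(1)]])
  moreover have "T ((1 / fact m) *\<^sub>R (L ^^ m) v) = (1 / fact m) *\<^sub>R (K ^^ m) (T v)" for m
    by (simp add: p linear.scaleR[OF bounded_linear.linear[OF assms(3)]])
  ultimately have "(\<lambda>m. (1 / fact m) *\<^sub>R (K ^^ m) (T v)) sums T (ev (exp (mk L)) v)" by simp
  then show ?thesis using ev_exp_sums[OF assms(2)] sums_unique2 by blast
qed

lemma exp_intertwine_s:
  fixes L :: "'a::euclidean_space \<Rightarrow> 'a" and K :: "'b::euclidean_space \<Rightarrow> 'b"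
  assumes "linear L" "linear K" "bounded_linear T" "\<And>v. T (L v) = K (T v)"
  shows "T (ev (exp (s *\<^sub>R mk L)) v) = ev (exp (s *\<^sub>R mk K)) (T v)"
proof -
  have "T (ev (exp (mk (\<lambda>y. s *\<^sub>R L y))) v) = ev (exp (mk (\<lambda>y. s *\<^sub>R K y))) (T v)"
    using assms by (intro exp_intertwine) (simp_all add: lin_sc linear.scaleR[OF bounded_linear.linear[OF assms(3)]])
  then show ?thesis using assms by (simp add: mk_scale)
qed

lemma mk_zero: "mk (\<lambda>v. 0) = 0"
  by (rule ev_eqI) (simp add: ev_mk linear_zero ev.zero_left)

lemma exp_kill_s:
  fixes L :: "'a::euclidean_space \<Rightarrow> 'a" and T :: "'a \<Rightarrow> 'b::euclidean_space"
  assumes "linear L" "bounded_linear T" "\<And>v. T (L v) = 0"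
  shows "T (ev (exp (s *\<^sub>R mk L)) v) = T v"
proof -
  have "T (ev (exp (s *\<^sub>R mk L)) v) = ev (exp (s *\<^sub>R mk (\<lambda>v::'b. 0))) (T v)"
    using assms by (intro exp_intertwine_s) (simp_all add: linear_zero)
  then show ?thesis by (simp add: mk_zero)
qed

lemma ev_exp_inv: "ev (exp (s *\<^sub>R a)) (ev (exp ((- s) *\<^sub>R a)) v) = v"
proof -
  have "exp (s *\<^sub>R a) * exp ((- s) *\<^sub>R a) = 1" using exp_minus_inverse[of "s *\<^sub>R a"] by simp
  then have "ev (exp (s *\<^sub>R a) * exp ((- s) *\<^sub>R a)) v = v" by simp
  then show ?thesis by (simp only: ev_mult)
qed

lemma ev_exp_deriv:
  assumes "(u has_vector_derivative u') (at t within T)"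
  shows "((\<lambda>s. ev (exp (s *\<^sub>R a)) (u s)) has_vector_derivative
           ev (exp (t *\<^sub>R a)) (ev a (u t) + u')) (at t within T)"
proof -
  have "((\<lambda>s. ev (exp (s *\<^sub>R a)) (u s)) has_vector_derivative
           (ev (exp (t *\<^sub>R a)) u' + ev (exp (t *\<^sub>R a) * a) (u t))) (at t within T)"
    by (rule ev.has_vector_derivative[OF exp_scaleR_has_vector_derivative_right assms])
  then show ?thesis by (simp add: ev_mult ev.add_right add.commute)
qed

lemma ev_exp_deriv_left:
  "((\<lambda>s. ev (exp (s *\<^sub>R a)) v) has_vector_derivative ev a (ev (exp (t *\<^sub>R a)) v)) (at t within T)"
proof -
  have "((\<lambda>s. ev (exp (s *\<^sub>R a)) v) has_vector_derivative ev (a * exp (t *\<^sub>R a)) v) (at t within T)"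
    using bounded_linear.has_vector_derivative[OF ev.bounded_linear_left
        has_vector_derivative_at_within[OF exp_scaleR_has_vector_derivative_left]] .
  then show ?thesis by (simp add: ev_mult)
qed

lemma exp_isometry:
  fixes K :: "'a::euclidean_space \<Rightarrow> 'a"
  assumes "linear K" "\<And>a b. K a \<bullet> b = - (a \<bullet> K b)"
  shows "ev (exp (s *\<^sub>R mk K)) a \<bullet> ev (exp (s *\<^sub>R mk K)) b = a \<bullet> b"
proof -
  let ?e = "\<lambda>s x. ev (exp (s *\<^sub>R mk K)) x"
  have d: "((\<lambda>s. ?e s a \<bullet> ?e s b) has_vector_derivative 0) (at t)" for t
  proof -
    have "((\<lambda>s. ?e s a \<bullet> ?e s b) has_vector_derivative
         (?e t a \<bullet> ev (mk K) (?e t b) + ev (mk K) (?e t a) \<bullet> ?e t b)) (at t)"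
      by (rule bounded_bilinear.has_vector_derivative[OF bounded_bilinear_inner ev_exp_deriv_left ev_exp_deriv_left])
    moreover have "?e t a \<bullet> ev (mk K) (?e t b) + ev (mk K) (?e t a) \<bullet> ?e t b = 0"
      using assms by (simp add: ev_mk)
    ultimately show ?thesis by simp
  qed
  have "(\<lambda>s. ?e s a \<bullet> ?e s b) s = (\<lambda>s. ?e s a \<bullet> ?e s b) 0"
    by (rule DERIV_isconst_all) (use d in \<open>simp add: has_real_derivative_iff_has_vector_derivative\<close>)
  then show ?thesis by simp
qed


section \<open>Matrix toolkit\<close>

lemma mm_add_r: "((A::real^'m^'n) + B) ** C = A ** C + B ** C"
  by (vector matrix_matrix_mult_def sum.distrib[symmetric] field_simps)
lemma mm_diff_l: "(A::real^'m^'n) ** (B - C) = A ** B - A ** C"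
  by (vector matrix_matrix_mult_def sum_subtractf[symmetric] field_simps)
lemma mm_diff_r: "((A::real^'m^'n) - B) ** C = A ** C - B ** C"
  by (vector matrix_matrix_mult_def sum_subtractf[symmetric] field_simps)
lemma mm_neg_l: "(- (A::real^'m^'n)) ** B = - (A ** B)"
  by (vector matrix_matrix_mult_def sum_negf[symmetric])
lemma mm_neg_r: "(A::real^'m^'n) ** (- B) = - (A ** B)"
  by (vector matrix_matrix_mult_def sum_negf[symmetric])
lemma mm_scale_l: "(r *\<^sub>R (A::real^'m^'n)) ** B = r *\<^sub>R (A ** B)"
  by (simp add: scalar_matrix_assoc)
lemma mm_scale_r: "(A::real^'m^'n) ** (r *\<^sub>R B) = r *\<^sub>R (A ** B)"
  by (simp add: matrix_scalar_ac scalar_matrix_assoc)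

lemma tr_add: "transpose ((A::real^'m^'n) + B) = transpose A + transpose B"
  by (simp add: transpose_def vec_eq_iff)
lemma tr_diff: "transpose ((A::real^'m^'n) - B) = transpose A - transpose B"
  by (simp add: transpose_def vec_eq_iff)
lemma tr_neg: "transpose (- (A::real^'m^'n)) = - transpose A"
  by (simp add: transpose_def vec_eq_iff)
lemma tr_zero: "transpose (0::real^'m^'n) = 0"
  by (simp add: transpose_def vec_eq_iff)

lemmas mm_simps = matrix_add_ldistrib mm_add_r mm_diff_l mm_diff_r mm_neg_l mm_neg_r
  mm_scale_l mm_scale_r tr_add tr_diff tr_neg tr_zero matrix_transpose_mul transpose_scalar
  transpose_transpose

lemma bl_mm_left: "bounded_linear (\<lambda>M. (A::real^'m^'n) ** (M::real^'p^'m))"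
  by (rule linear_conv_bounded_linear[THEN iffD1]) (simp add: linear_iff matrix_add_ldistrib mm_scale_r)
lemma bl_mm_right: "bounded_linear (\<lambda>M. (M::real^'m^'n) ** (A::real^'p^'m))"
  by (rule linear_conv_bounded_linear[THEN iffD1]) (simp add: linear_iff mm_add_r mm_scale_l)
lemma bl_transpose: "bounded_linear (\<lambda>M. transpose (M::real^'m^'n))"
  by (rule linear_conv_bounded_linear[THEN iffD1]) (simp add: linear_iff tr_add transpose_scalar)

lemma inner_mat: "(A::real^'m^'n) \<bullet> B = (\<Sum>i\<in>UNIV. \<Sum>j\<in>UNIV. A$i$j * B$i$j)"
  by (simp add: inner_vec_def)

lemma trace_inner: "trace (transpose (V::real^'m^'n) ** W) = V \<bullet> W"
  by (simp add: trace_def inner_mat matrix_matrix_mult_def transpose_def)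
     (rule sum.swap)

lemma euclid_metric_inner: "euclid_metric V W = 2 * (V \<bullet> W)"
  by (simp add: euclid_metric_def trace_inner)

lemma inner_mm1: "((A::real^'m^'n) ** B) \<bullet> C = B \<bullet> (transpose A ** C)"
proof -
  have "((A::real^'m^'n) ** B) \<bullet> C = (\<Sum>i\<in>UNIV. \<Sum>j\<in>UNIV. \<Sum>l\<in>UNIV. A$i$l * B$l$j * C$i$j)"
    by (simp add: inner_mat matrix_matrix_mult_def sum_distrib_right)
  also have "\<dots> = (\<Sum>i\<in>UNIV. \<Sum>l\<in>UNIV. \<Sum>j\<in>UNIV. A$i$l * B$l$j * C$i$j)"
    by (rule sum.cong[OF refl], rule sum.swap)
  also have "\<dots> = (\<Sum>l\<in>UNIV. \<Sum>i\<in>UNIV. \<Sum>j\<in>UNIV. A$i$l * B$l$j * C$i$j)"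
    by (rule sum.swap)
  also have "\<dots> = (\<Sum>l\<in>UNIV. \<Sum>j\<in>UNIV. \<Sum>i\<in>UNIV. A$i$l * B$l$j * C$i$j)"
    by (rule sum.cong[OF refl], rule sum.swap)
  also have "\<dots> = B \<bullet> (transpose A ** C)"
    by (simp add: inner_mat matrix_matrix_mult_def transpose_def sum_distrib_left mult_ac)
  finally show ?thesis .
qed

lemma inner_mm2: "((A::real^'m^'n) ** B) \<bullet> C = A \<bullet> (C ** transpose B)"
proof -
  have "((A::real^'m^'n) ** B) \<bullet> C = (\<Sum>i\<in>UNIV. \<Sum>j\<in>UNIV. \<Sum>l\<in>UNIV. A$i$l * B$l$j * C$i$j)"
    by (simp add: inner_mat matrix_matrix_mult_def sum_distrib_right)
  also have "\<dots> = (\<Sum>i\<in>UNIV. \<Sum>l\<in>UNIV. \<Sum>j\<in>UNIV. A$i$l * B$l$j * C$i$j)"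
    by (rule sum.cong[OF refl], rule sum.swap)
  also have "\<dots> = A \<bullet> (C ** transpose B)"
    by (simp add: inner_mat matrix_matrix_mult_def transpose_def sum_distrib_left mult_ac)
  finally show ?thesis .
qed

lemma inner_tr: "transpose (A::real^'m^'n) \<bullet> transpose B = A \<bullet> B"
  by (simp add: inner_mat transpose_def) (rule sum.swap)


section \<open>Projections on the Stiefel manifold\<close>

lemma P_perp_linear: "linear (P_perp Y)"
  by (simp add: linear_iff P_perp_def mm_simps algebra_simps)

lemma P_perp_bl: "bounded_linear (P_perp Y)"
  using P_perp_linear linear_conv_bounded_linear by blast

lemma P_perp_diff: "P_perp Y (a - b) = P_perp Y a - P_perp Y b"
  using P_perp_linear linear_diff by blast
lemma P_perp_add: "P_perp Y (a + b) = P_perp Y a + P_perp Y b"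
  using P_perp_linear linear_add by blast
lemma P_perp_zero: "P_perp Y 0 = 0"
  using P_perp_linear linear_0 by blast
lemma P_perp_scale: "P_perp Y (r *\<^sub>R a) = r *\<^sub>R P_perp Y a"
  using P_perp_linear linear_scale by blast

context
  fixes Y :: "real^'k::finite^'n::finite"
  assumes Y: "Y \<in> stiefel"
begin

lemma YtY: "transpose Y ** Y = mat 1" using Y by (simp add: stiefel_def)
lemma YtY': "transpose Y ** (Y ** M) = M" by (simp add: matrix_mul_assoc YtY)

lemma Yt_P: "transpose Y ** P_perp Y V = (1/2) *\<^sub>R (transpose Y ** V + transpose V ** Y)"
  by (simp add: P_perp_def mm_simps YtY')

lemma P_idem: "P_perp Y (P_perp Y V) = P_perp Y V"
proof -
  let ?S = "transpose Y ** V + transpose V ** Y"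
  have e1: "transpose Y ** P_perp Y V = (1/2) *\<^sub>R ?S" by (rule Yt_P)
  have e2: "transpose (P_perp Y V) ** Y = (1/2) *\<^sub>R ?S"
  proof -
    have "transpose (P_perp Y V) ** Y = transpose (transpose Y ** P_perp Y V)"
      by (simp add: matrix_transpose_mul)
    also have "\<dots> = (1/2) *\<^sub>R ?S" by (simp add: e1 mm_simps add.commute)
    finally show ?thesis .
  qed
  have "P_perp Y (P_perp Y V) = (1/2) *\<^sub>R (Y ** ((1/2) *\<^sub>R ?S + (1/2) *\<^sub>R ?S))"
    unfolding P_perp_def[of Y "P_perp Y V"] e1 e2 ..
  also have "(1/2) *\<^sub>R ?S + (1/2) *\<^sub>R ?S = ?S"
    by (simp only: scaleR_add_left[symmetric]) simp
  finally show ?thesis by (simp only: P_perp_def)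
qed

lemma inner_tr_swap: "(transpose a ** Y) \<bullet> (transpose Y ** b) = (transpose Y ** a) \<bullet> (transpose b ** Y)"
proof -
  have t1: "transpose a ** Y = transpose (transpose Y ** a)" by (simp add: matrix_transpose_mul)
  have t2: "transpose Y ** b = transpose (transpose b ** Y)" by (simp add: matrix_transpose_mul)
  show ?thesis by (subst t1, subst t2, rule inner_tr)
qed

lemma P_inner: "P_perp Y a \<bullet> b = (1/2) * ((transpose Y ** a) \<bullet> (transpose Y ** b) + (transpose Y ** a) \<bullet> (transpose b ** Y))"
proof -
  have 1: "P_perp Y a \<bullet> b = (1/2) * ((transpose Y ** a + transpose a ** Y) \<bullet> (transpose Y ** b))"
    by (simp only: P_perp_def inner_scaleR_left inner_mm1)
  show ?thesis by (simp only: 1 inner_add_left inner_tr_swap)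
qed

lemma P_sym: "P_perp Y a \<bullet> b = a \<bullet> P_perp Y b"
proof -
  have "(transpose Y ** b) \<bullet> (transpose a ** Y) = (transpose Y ** a) \<bullet> (transpose b ** Y)"
    by (simp only: inner_commute[of "transpose Y ** b"] inner_tr_swap)
  then show ?thesis
    by (simp only: inner_commute[of a] P_inner) (simp add: inner_commute)
qed

lemma tangent_iff: "V \<in> stiefel_tangent Y \<longleftrightarrow> P_perp Y V = 0"
proof
  assume "V \<in> stiefel_tangent Y"
  then show "P_perp Y V = 0" by (simp add: stiefel_tangent_def P_perp_def)
next
  assume "P_perp Y V = 0"
  then have "transpose Y ** P_perp Y V = 0" by simp
  then show "V \<in> stiefel_tangent Y" by (simp add: Yt_P stiefel_tangent_def)
qed

lemma normal_iff: "V \<in> stiefel_normal Y \<longleftrightarrow> P_perp Y V = V"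
proof
  assume N: "V \<in> stiefel_normal Y"
  have o: "V \<bullet> W = 0" if "P_perp Y W = 0" for W
    using N that tangent_iff by (simp add: stiefel_normal_def trace_inner)
  have t: "P_perp Y (V - P_perp Y V) = 0" by (simp add: P_perp_diff P_idem)
  have "(V - P_perp Y V) \<bullet> (V - P_perp Y V) = V \<bullet> (V - P_perp Y V) - P_perp Y V \<bullet> (V - P_perp Y V)"
    by (simp add: inner_diff_left)
  also have "\<dots> = 0" using o[OF t] by (simp add: P_sym t)
  finally show "P_perp Y V = V" by simp
next
  assume "P_perp Y V = V"
  then show "V \<in> stiefel_normal Y"
    by (auto simp: stiefel_normal_def trace_inner tangent_iff) (metis P_sym inner_zero_right)
qed

lemma orth_proj_unique:
  assumes S: "\<And>a b. a \<in> S \<Longrightarrow> b \<in> S \<Longrightarrow> a - b \<in> S"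
    and w: "w \<in> S" "\<And>u. u \<in> S \<Longrightarrow> (D - w) \<bullet> u = 0"
  shows "orth_proj euclid_metric S D = w"
  unfolding orth_proj_def euclid_metric_inner
proof (rule the_equality)
  show "w \<in> S \<and> (\<forall>u\<in>S. 2 * ((D - w) \<bullet> u) = 0)" using w by simp
  fix w' assume h: "w' \<in> S \<and> (\<forall>u\<in>S. 2 * ((D - w') \<bullet> u) = 0)"
  have d: "w - w' \<in> S" using S w h by blast
  have "(D - w') \<bullet> (w - w') - (D - w) \<bullet> (w - w') = 0" using h d w by simp
  then have "(w - w') \<bullet> (w - w') = 0" by (simp add: inner_diff_left algebra_simps)
  then show "w' = w" by simp
qed

lemma orth_proj_tangent: "orth_proj euclid_metric (stiefel_tangent Y) D = D - P_perp Y D"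
  by (rule orth_proj_unique)
     (auto simp: tangent_iff P_perp_diff P_idem P_sym)

lemma orth_proj_normal: "orth_proj euclid_metric (stiefel_normal Y) D = P_perp Y D"
proof (rule orth_proj_unique)
  fix a b assume "a \<in> stiefel_normal Y" "b \<in> stiefel_normal Y"
  then show "a - b \<in> stiefel_normal Y" by (simp add: normal_iff P_perp_diff)
next
  show "P_perp Y D \<in> stiefel_normal Y" by (simp add: normal_iff P_idem)
next
  fix u assume "u \<in> stiefel_normal Y"
  then have "u = P_perp Y u" by (simp add: normal_iff)
  then have "(D - P_perp Y D) \<bullet> u = P_perp Y (D - P_perp Y D) \<bullet> u"
    by (metis P_sym)
  then show "(D - P_perp Y D) \<bullet> u = 0" by (simp add: P_perp_diff P_idem)
qed

end


section \<open>Matrix exponential\<close>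

definition lm :: "real^'m^'m \<Rightarrow> real^'p^'m \<Rightarrow> real^'p^'m" where
  "lm A M = A ** M"

lemma lm_linear: "linear (lm A)"
  unfolding lm_def using bl_mm_left bounded_linear.linear by blast

lemma lm_eta: "lm A = (**) A"
  by (simp add: fun_eq_iff lm_def)

lemma mexp_op: "mexp A = op_exp (lm A) (mat 1)"
  by (simp add: mexp_def op_exp_def lm_eta)

lemma lm_scale: "lm (s *\<^sub>R A) = (\<lambda>M. s *\<^sub>R lm A M)"
  by (simp add: lm_def fun_eq_iff mm_scale_l)

lemma mexp_ev: "mexp (s *\<^sub>R A) = ev (exp (s *\<^sub>R mk (lm A))) (mat 1)"
  by (simp add: mexp_op lm_scale op_exp_scaled lm_linear)

lemma mexp_right: "ev (exp (s *\<^sub>R mk (lm A))) M = mexp (s *\<^sub>R A) ** M"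
proof -
  have "(\<lambda>N. N ** M) (ev (exp (s *\<^sub>R mk (lm A))) (mat 1)) = ev (exp (s *\<^sub>R mk (lm A))) ((\<lambda>N. N ** M) (mat 1))"
    by (rule exp_intertwine_s) (simp_all add: lm_linear lm_linear[unfolded lm_eta] bl_mm_right lm_def matrix_mul_assoc)
  then show ?thesis by (simp add: mexp_ev)
qed

lemma mexp_inv: "mexp (s *\<^sub>R A) ** mexp ((- s) *\<^sub>R A) = mat 1"
  by (metis mexp_right mexp_ev ev_exp_inv)

lemma mexp_inv': "mexp ((- s) *\<^sub>R A) ** mexp (s *\<^sub>R A) = mat 1"
  using mexp_inv[of "- s" A] by simp

lemma mexp_commute: "A ** mexp (s *\<^sub>R A) = mexp (s *\<^sub>R A) ** A"
proof -
  have "lm A (ev (exp (s *\<^sub>R mk (lm A))) (mat 1)) = ev (exp (s *\<^sub>R mk (lm A))) (lm A (mat 1))"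
    by (rule exp_intertwine_s[OF lm_linear lm_linear]) (simp_all add: lm_eta bl_mm_left)
  then show ?thesis by (simp add: mexp_ev[symmetric] mexp_right lm_def)
qed

lemma mexp_deriv:
  "((\<lambda>s. mexp (s *\<^sub>R A)) has_vector_derivative mexp (t *\<^sub>R A) ** A) (at t within T)"
proof -
  have "((\<lambda>s. ev (exp (s *\<^sub>R mk (lm A))) (mat 1)) has_vector_derivative
      ev (exp (t *\<^sub>R mk (lm A))) (ev (mk (lm A)) (mat 1) + 0)) (at t within T)"
    by (rule ev_exp_deriv) simp
  then show ?thesis by (simp add: mexp_ev[symmetric] mexp_right ev_mk lm_linear lm_def)
qed

lemma mexp_orth:
  fixes A :: "real^'m^'m"
  assumes "skew A"
  shows "transpose (mexp (s *\<^sub>R A)) ** mexp (s *\<^sub>R A) = mat 1"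
proof -
  let ?G = "mexp (s *\<^sub>R A)"
  have sk: "lm A a \<bullet> b = - (a \<bullet> lm A b)" for a b :: "real^'m^'m"
    using assms by (simp add: lm_def inner_mm1 skew_def mm_simps)
  have iso: "(?G ** M) \<bullet> (?G ** N) = M \<bullet> N" for M N :: "real^'m^'m"
    using exp_isometry[OF lm_linear sk, of s M N] by (simp add: mexp_right)
  have "(transpose ?G ** ?G ** N) = N" for N :: "real^'m^'m"
  proof -
    let ?D = "transpose ?G ** (?G ** N) - N"
    have "?D \<bullet> (transpose ?G ** (?G ** N)) = (?G ** ?D) \<bullet> (?G ** N)"
      by (rule inner_mm1[symmetric])
    then have "?D \<bullet> ?D = 0" using iso[of ?D N] by (simp add: inner_diff_right)
    then show ?thesis by (simp add: matrix_mul_assoc)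
  qed
  from this[of "mat 1"] show ?thesis by simp
qed

lemma mexp_transpose:
  fixes A :: "real^'m^'m"
  assumes "skew A"
  shows "transpose (mexp (s *\<^sub>R A)) = mexp ((- s) *\<^sub>R A)"
proof -
  have "transpose (mexp (s *\<^sub>R A)) = transpose (mexp (s *\<^sub>R A)) ** (mexp (s *\<^sub>R A) ** mexp ((- s) *\<^sub>R A))"
    by (simp only: mexp_inv matrix_mul_rid)
  also have "\<dots> = mexp ((- s) *\<^sub>R A)"
    by (simp add: matrix_mul_assoc mexp_orth[OF assms])
  finally show ?thesis .
qed

lemma mexp_orth':
  fixes A :: "real^'m^'m"
  assumes "skew A"
  shows "mexp (s *\<^sub>R A) ** transpose (mexp (s *\<^sub>R A)) = mat 1"
  by (simp only: mexp_transpose[OF assms] mexp_inv)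

lemma mexp_intertwine:
  fixes A :: "real^'n^'n" and B :: "real^'k^'k" and X :: "real^'k^'n"
  assumes "A ** X = X ** B"
  shows "mexp A ** X = X ** mexp B"
proof -
  have p: "((lm A ^^ m) (mat 1)) ** X = X ** ((lm B ^^ m) (mat 1))" for m
  proof (induction m)
    case 0 then show ?case by simp
  next
    case (Suc m)
    have "(lm A ^^ Suc m) (mat 1) ** X = A ** ((lm A ^^ m) (mat 1) ** X)"
      by (simp add: lm_eta matrix_mul_assoc)
    also have "\<dots> = X ** (lm B ^^ Suc m) (mat 1)"
      using Suc by (simp add: lm_eta matrix_mul_assoc assms)
    finally show ?case .
  qed
  have s1: "(\<lambda>m. (\<lambda>N. N ** X) ((1 / fact m) *\<^sub>R (lm A ^^ m) (mat 1))) sums ((\<lambda>N. N ** X) (mexp A))"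
    by (rule bounded_linear.sums[OF bl_mm_right]) (simp add: mexp_op op_exp_ev lm_linear ev_exp_sums)
  have s2: "(\<lambda>m. (\<lambda>N. X ** N) ((1 / fact m) *\<^sub>R (lm B ^^ m) (mat 1))) sums ((\<lambda>N. X ** N) (mexp B))"
    by (rule bounded_linear.sums[OF bl_mm_left]) (simp add: mexp_op op_exp_ev lm_linear ev_exp_sums)
  show ?thesis using s1 s2 p by (simp add: mm_simps sums_unique2)
qed

lemma matrix_inv_eq:
  fixes A B :: "real^'m^'m"
  assumes "A ** B = mat 1" "B ** A = mat 1"
  shows "matrix_inv A = B"
  unfolding matrix_inv_def
proof (rule some_equality)
  show "A ** B = mat 1 \<and> B ** A = mat 1" using assms by simp
  fix B' assume h: "A ** B' = mat 1 \<and> B' ** A = mat 1"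
  have "B' = B' ** (A ** B)" by (simp add: assms)
  also have "\<dots> = B" by (simp add: matrix_mul_assoc h)
  finally show "B' = B" .
qed

lemma mexp_matrix_inv: "matrix_inv (mexp (s *\<^sub>R A)) = mexp ((- s) *\<^sub>R A)"
  by (rule matrix_inv_eq[OF mexp_inv mexp_inv'])


section \<open>The action Phi and the moving frame\<close>

definition orthp :: "('n::finite,'k::finite) lalg \<Rightarrow> bool" where
  "orthp g \<longleftrightarrow> transpose (fst g) ** fst g = mat 1 \<and> fst g ** transpose (fst g) = mat 1 \<and>
               transpose (snd g) ** snd g = mat 1 \<and> snd g ** transpose (snd g) = mat 1"

definition trp :: "('n::finite,'k::finite) lalg \<Rightarrow> ('n,'k) lalg" where
  "trp g = (transpose (fst g), transpose (snd g))"

lemma orthp_trp: "orthp g \<Longrightarrow> orthp (trp g)"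
  by (simp add: orthp_def trp_def)

lemma orthp_gexp: "skew (fst xi) \<Longrightarrow> skew (snd xi) \<Longrightarrow> orthp (gexp t xi)"
  by (simp add: orthp_def gexp_def mexp_orth mexp_orth')

lemma trp_gexp: "skew (fst xi) \<Longrightarrow> skew (snd xi) \<Longrightarrow> trp (gexp t xi) = gexp t (- xi)"
  by (simp add: trp_def gexp_def mexp_transpose)

lemma skew_neg: "skew A \<Longrightarrow> skew (- A)"
  by (simp add: skew_def tr_neg)

lemma Phi_linear: "linear (Phi g)"
  by (simp add: linear_iff Phi_def mm_simps)

lemma Phi_bl: "bounded_linear (Phi g)"
  using Phi_linear linear_conv_bounded_linear by blast

lemma Phi_comp: "Phi g (Phi h V) = Phi (fst g ** fst h, snd g ** snd h) V"
  by (simp add: Phi_def matrix_mul_assoc matrix_transpose_mul)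

context
  fixes g :: "('n::finite,'k::finite) lalg"
  assumes og: "orthp g"
begin

lemma og1: "transpose (fst g) ** fst g = mat 1" using og by (simp add: orthp_def)
lemma og2: "fst g ** transpose (fst g) = mat 1" using og by (simp add: orthp_def)
lemma og3: "transpose (snd g) ** snd g = mat 1" using og by (simp add: orthp_def)
lemma og4: "snd g ** transpose (snd g) = mat 1" using og by (simp add: orthp_def)
lemma og1': "M ** transpose (fst g) ** fst g = M" by (simp add: matrix_mul_assoc[symmetric] og1)
lemma og2': "M ** fst g ** transpose (fst g) = M" by (simp add: matrix_mul_assoc[symmetric] og2)
lemma og3': "M ** transpose (snd g) ** snd g = M" by (simp add: matrix_mul_assoc[symmetric] og3)
lemma og4': "M ** snd g ** transpose (snd g) = M" by (simp add: matrix_mul_assoc[symmetric] og4)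
lemmas ogs = og1 og2 og3 og4 og1' og2' og3' og4'

lemma Phi_inner: "Phi g A \<bullet> Phi g B = A \<bullet> B"
proof -
  have "Phi g A \<bullet> Phi g B = (fst g ** (A ** transpose (snd g))) \<bullet> (fst g ** (B ** transpose (snd g)))"
    by (simp only: Phi_def matrix_mul_assoc)
  also have "\<dots> = (A ** transpose (snd g)) \<bullet> (transpose (fst g) ** (fst g ** (B ** transpose (snd g))))"
    by (rule inner_mm1)
  also have "\<dots> = (A ** transpose (snd g)) \<bullet> (B ** transpose (snd g))"
    by (simp only: matrix_mul_assoc ogs matrix_mul_lid)
  also have "\<dots> = A \<bullet> (B ** transpose (snd g) ** transpose (transpose (snd g)))"
    by (rule inner_mm2)
  also have "\<dots> = A \<bullet> B"
    by (simp only: transpose_transpose ogs)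
  finally show ?thesis .
qed

lemma Phi_inv1: "Phi (trp g) (Phi g V) = V"
  by (simp add: trp_def Phi_def matrix_mul_assoc ogs)

lemma Phi_inv2: "Phi g (Phi (trp g) V) = V"
  by (simp add: trp_def Phi_def matrix_mul_assoc ogs)

lemma Phi_tr_Phi: "transpose (Phi g A) ** Phi g B = snd g ** (transpose A ** B) ** transpose (snd g)"
  by (simp add: Phi_def matrix_transpose_mul matrix_mul_assoc ogs)

lemma Phi_stiefel: "X \<in> stiefel \<Longrightarrow> Phi g X \<in> stiefel"
  by (simp add: stiefel_def Phi_tr_Phi ogs)

lemma Phi_P: "P_perp (Phi g X) (Phi g V) = Phi g (P_perp X V)"
proof -
  have "P_perp (Phi g X) (Phi g V) = (1/2) *\<^sub>R (Phi g X ** (snd g ** (transpose X ** V + transpose V ** X) ** transpose (snd g)))"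
    by (simp add: P_perp_def Phi_tr_Phi mm_simps)
  also have "\<dots> = Phi g (P_perp X V)"
    by (simp add: Phi_def P_perp_def mm_simps matrix_mul_assoc ogs)
  finally show ?thesis .
qed

end

lemma bb_mm: "bounded_bilinear (\<lambda>(A::real^'m^'n) (B::real^'p^'m). A ** B)"
proof -
  have "bilinear (\<lambda>(A::real^'m^'n) (B::real^'p^'m). A ** B)"
    unfolding bilinear_def
    by (intro conjI allI bounded_linear.linear bl_mm_left bl_mm_right)
  then show ?thesis by (simp add: bilinear_conv_bounded_bilinear)
qed

lemma f_xi_linear: "linear (f_xi xi)"
  by (simp add: linear_iff f_xi_def mm_simps algebra_simps)

lemma f_xi_skew:
  assumes "skew (fst xi)" "skew (snd xi)"
  shows "f_xi xi a \<bullet> b = - (a \<bullet> f_xi xi b)"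
proof -
  have "f_xi xi a \<bullet> b = (fst xi ** a) \<bullet> b - (a ** snd xi) \<bullet> b"
    by (simp only: f_xi_def inner_diff_left)
  also have "\<dots> = a \<bullet> (transpose (fst xi) ** b) - a \<bullet> (b ** transpose (snd xi))"
    by (simp only: inner_mm1[of "fst xi" a] inner_mm2[of a "snd xi"])
  also have "\<dots> = - (a \<bullet> f_xi xi b)"
    using assms by (simp add: skew_def f_xi_def mm_simps inner_diff_right inner_minus_right)
  finally show ?thesis .
qed

lemma moving_frame:
  assumes "skew (fst xi)" "skew (snd xi)"
    and U: "(U has_vector_derivative U') (at t within T)"
  shows "((\<lambda>s. Phi (gexp s xi) (U s)) has_vector_derivative
           Phi (gexp t xi) (f_xi xi (U t) + U')) (at t within T)"
proof -
  let ?G1 = "\<lambda>s. mexp (s *\<^sub>R fst xi)" and ?G2 = "\<lambda>s. mexp (s *\<^sub>R snd xi)"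
  have d1: "(?G1 has_vector_derivative ?G1 t ** fst xi) (at t within T)" by (rule mexp_deriv)
  have d2: "((\<lambda>s. transpose (?G2 s)) has_vector_derivative transpose (?G2 t ** snd xi)) (at t within T)"
    by (rule bounded_linear.has_vector_derivative[OF bl_transpose mexp_deriv])
  have d3: "((\<lambda>s. ?G1 s ** U s) has_vector_derivative ?G1 t ** U' + (?G1 t ** fst xi) ** U t) (at t within T)"
    by (rule bounded_bilinear.has_vector_derivative[OF bb_mm d1 U])
  have d4: "((\<lambda>s. (?G1 s ** U s) ** transpose (?G2 s)) has_vector_derivative
      (?G1 t ** U t) ** transpose (?G2 t ** snd xi) + (?G1 t ** U' + (?G1 t ** fst xi) ** U t) ** transpose (?G2 t))
      (at t within T)"
    by (rule bounded_bilinear.has_vector_derivative[OF bb_mm d3 d2])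
  have e: "(?G1 t ** U t) ** transpose (?G2 t ** snd xi) + (?G1 t ** U' + (?G1 t ** fst xi) ** U t) ** transpose (?G2 t)
     = Phi (gexp t xi) (f_xi xi (U t) + U')"
  proof -
    have "transpose (?G2 t ** snd xi) = - (snd xi ** transpose (?G2 t))"
      using assms(2) by (simp add: matrix_transpose_mul skew_def mm_simps)
    then show ?thesis
      by (simp add: Phi_def gexp_def f_xi_def mm_simps matrix_mul_assoc algebra_simps)
  qed
  show ?thesis using d4 unfolding e by (simp add: Phi_def gexp_def)
qed


lemma hvd_bot: "at t within I = bot \<Longrightarrow> (f has_vector_derivative D) (at t within I)"
  by (simp add: has_vector_derivative_def has_derivative_def bounded_linear_scaleR_left)

lemma deriv_closed:
  assumes T: "bounded_linear T" and t: "t \<in> I" and nb: "at t within I \<noteq> bot"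
    and Z: "\<And>s. s \<in> I \<Longrightarrow> T (Z s) = 0"
    and D: "(Z has_vector_derivative D) (at t within I)"
  shows "T D = 0"
proof -
  have 1: "((\<lambda>s. T (Z s)) has_vector_derivative T D) (at t within I)"
    by (rule bounded_linear.has_vector_derivative[OF T D])
  have 2: "((\<lambda>s. T (Z s)) has_vector_derivative 0) (at t within I)"
    by (rule has_vector_derivative_transform[OF t _ has_vector_derivative_const]) (simp add: Z)
  show ?thesis by (rule vector_derivative_unique_within[OF nb 1 2])
qed

lemma normal_parallel_eq: "normal_parallel = tangent_parallel"
  by (simp add: fun_eq_iff normal_parallel_def tangent_parallel_def)

lemma rolling_generic:
  fixes X :: "real^'k::finite^'n::finite" and xi :: "('n,'k) lalg"
    and pr :: "real^'k^'n \<Rightarrow> real^'k^'n \<Rightarrow> real^'k^'n"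
    and SS :: "real^'k^'n \<Rightarrow> (real^'k^'n) set"
    and K :: "real^'k^'n \<Rightarrow> real^'k^'n"
    and F :: "real \<Rightarrow> real^'k^'n \<Rightarrow> real^'k^'n"
  assumes sk1: "skew (fst xi)" and sk2: "skew (snd xi)" and X: "X \<in> stiefel"
    and pr_lin: "\<And>Y. Y \<in> stiefel \<Longrightarrow> linear (pr Y)"
    and pr_idem: "\<And>Y V. Y \<in> stiefel \<Longrightarrow> pr Y (pr Y V) = pr Y V"
    and pr_sym: "\<And>Y a b. Y \<in> stiefel \<Longrightarrow> pr Y a \<bullet> b = a \<bullet> pr Y b"
    and pr_Phi: "\<And>g V. orthp g \<Longrightarrow> pr (Phi g X) (Phi g V) = Phi g (pr X V)"
    and SS: "\<And>Y. Y \<in> stiefel \<Longrightarrow> SS Y = {V. pr Y V = V}"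
    and OP: "\<And>Y D. Y \<in> stiefel \<Longrightarrow> orth_proj euclid_metric (SS Y) D = pr Y D"
    and K_def: "K = (\<lambda>V. pr X (f_xi xi (pr X V)))"
    and F_def: "F = (\<lambda>t V. Phi (gexp t xi) (ev (exp ((- t) *\<^sub>R mk K)) V))"
  shows rolling_generic_iso: "lin_isometry euclid_metric (SS X) (SS (Phi (gexp t xi) X)) (F t)"
    and rolling_generic_par: "(\<forall>t\<in>I. Z t \<in> SS X) \<Longrightarrow>
      tangent_parallel euclid_metric I SS (\<lambda>t. Phi (gexp t xi) X) (\<lambda>t. F t (Z t)) \<longleftrightarrow>
      tangent_parallel euclid_metric I (\<lambda>_. SS X) c Z"
proof -
  define E where "E = (\<lambda>s. ev (exp (s *\<^sub>R mk K)))"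
  have F_E: "F t V = Phi (gexp t xi) (E (- t) V)" for t V by (simp add: F_def E_def)
  have og: "orthp (gexp t xi)" for t by (rule orthp_gexp[OF sk1 sk2])
  have bhS: "Phi (gexp t xi) X \<in> stiefel" for t by (rule Phi_stiefel[OF og X])
  have prX: "linear (pr X)" by (rule pr_lin[OF X])
  have K_lin: "linear K"
    using linear_compose[OF linear_compose[OF prX f_xi_linear] prX]
    by (simp add: K_def o_def)
  have K_skew: "K a \<bullet> b = - (a \<bullet> K b)" for a b
    unfolding K_def
    by (simp add: pr_sym[OF X] f_xi_skew[OF sk1 sk2])
  have E_inv: "E s (E (- s) v) = v" "E (- s) (E s v) = v" for s v
    unfolding E_def using ev_exp_inv[of s] ev_exp_inv[of "- s"] by simp_all
  have E_lin: "linear (E s)" for s unfolding E_def by (rule linear_ev)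
  have bl_c: "bounded_linear (\<lambda>V. V - pr X V)"
    using prX by (simp add: linear_conv_bounded_linear[symmetric] linear_compose_sub linear_id[unfolded id_def])
  have E_pres: "pr X (E s V) = E s V" if "pr X V = V" for s V
  proof -
    have "(\<lambda>V. V - pr X V) (E s V) = (\<lambda>V. V - pr X V) V"
      unfolding E_def
      by (rule exp_kill_s[OF K_lin bl_c]) (simp add: K_def pr_idem[OF X])
    then show ?thesis using that by simp
  qed
  have E_K: "E s (K v) = K (E s v)" for s v
  proof -
    have "K (E s v) = E s (K v)"
      unfolding E_def
      by (rule exp_intertwine_s[OF K_lin K_lin]) (simp_all add: K_lin linear_conv_bounded_linear[symmetric])
    then show ?thesis by simp
  qed
  have E_iso: "E s a \<bullet> E s b = a \<bullet> b" for s a b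
    unfolding E_def by (rule exp_isometry[OF K_lin K_skew])
  have Phi_inj: "V = 0" if "Phi (gexp t xi) V = 0" for t V
    using Phi_inv1[OF og, of t V] that Phi_linear linear_0 by metis
  have SX: "SS X = {V. pr X V = V}" by (rule SS[OF X])
  have Sbh: "SS (Phi (gexp t xi) X) = {V. pr (Phi (gexp t xi) X) V = V}" for t by (rule SS[OF bhS])
  have F_mem: "F t V \<in> SS (Phi (gexp t xi) X)" if "V \<in> SS X" for t V
    using that by (simp add: SX Sbh F_E pr_Phi[OF og] E_pres)
    show "lin_isometry euclid_metric (SS X) (SS (Phi (gexp t xi) X)) (F t)"
    unfolding lin_isometry_def
  proof (intro conjI ballI allI)
    fix x y a b
    show "F t (a *\<^sub>R x + b *\<^sub>R y) = a *\<^sub>R F t x + b *\<^sub>R F t y"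
      by (simp add: F_E linear_add[OF E_lin] linear_scale[OF E_lin] linear_add[OF Phi_linear]
          linear_scale[OF Phi_linear])
  next
    fix x y
    show "euclid_metric (F t x) (F t y) = euclid_metric x y"
      by (simp add: euclid_metric_inner F_E Phi_inner[OF og] E_iso)
  next
    show "F t ` SS X = SS (Phi (gexp t xi) X)"
    proof
      show "F t ` SS X \<subseteq> SS (Phi (gexp t xi) X)" using F_mem by blast
      show "SS (Phi (gexp t xi) X) \<subseteq> F t ` SS X"
      proof
        fix W assume W: "W \<in> SS (Phi (gexp t xi) X)"
        define V' where "V' = Phi (trp (gexp t xi)) W"
        have "Phi (gexp t xi) (pr X V') = pr (Phi (gexp t xi) X) W"
          by (simp add: V'_def pr_Phi[OF og, symmetric] Phi_inv2[OF og])
        also have "\<dots> = W" using W by (simp add: Sbh)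
        finally have "pr X V' = Phi (trp (gexp t xi)) W"
          by (metis Phi_inv1[OF og])
        then have V'S: "pr X V' = V'" by (simp add: V'_def)
        have "W = F t (E t V')"
          by (simp add: F_E E_inv V'_def Phi_inv2[OF og])
        moreover have "E t V' \<in> SS X" using V'S by (simp add: SX E_pres)
        ultimately show "W \<in> F t ` SS X" by blast
      qed
    qed
  qed
    assume ZS: "\<forall>t\<in>I. Z t \<in> SS X"
  define U where "U = (\<lambda>s. E (- s) (Z s))"
  define W where "W = (\<lambda>s. F s (Z s))"
  have W_U: "W s = Phi (gexp s xi) (U s)" for s by (simp add: W_def U_def F_E)
  have U_W: "U s = Phi (gexp s (- xi)) (W s)" for s
    using Phi_inv1[OF og] by (simp add: W_U trp_gexp[OF sk1 sk2, symmetric])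
  have Z_U: "Z s = E s (U s)" for s by (simp add: U_def E_inv)
  have ZX: "pr X (Z s) = Z s" if "s \<in> I" for s using ZS that by (simp add: SX)
  have UX: "pr X (U s) = U s" if "s \<in> I" for s using ZX[OF that] by (simp add: U_def E_pres)
  have ev_neg: "ev (exp (s *\<^sub>R (- mk K))) v = E (- s) v" for s v
    by (simp add: E_def)
  have U_der: "(U has_vector_derivative E (- t) (- K (Z t) + Dz)) (at t within I)"
    if "(Z has_vector_derivative Dz) (at t within I)" for t Dz
  proof -
    have "((\<lambda>s. ev (exp (s *\<^sub>R (- mk K))) (Z s)) has_vector_derivative
        ev (exp (t *\<^sub>R (- mk K))) (ev (- mk K) (Z t) + Dz)) (at t within I)"
      by (rule ev_exp_deriv[OF that])
    moreover have "(\<lambda>s. ev (exp (s *\<^sub>R (- mk K))) (Z s)) = U"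
      by (simp add: U_def E_def fun_eq_iff)
    moreover have "ev (exp (t *\<^sub>R (- mk K))) (ev (- mk K) (Z t) + Dz) = E (- t) (- K (Z t) + Dz)"
      by (simp add: E_def ev.minus_left ev_mk[OF K_lin])
    ultimately show ?thesis by simp
  qed
  have Z_der: "(Z has_vector_derivative E t (K (U t) + Du)) (at t within I)"
    if "(U has_vector_derivative Du) (at t within I)" for t Du
  proof -
    have "((\<lambda>s. ev (exp (s *\<^sub>R mk K)) (U s)) has_vector_derivative
        ev (exp (t *\<^sub>R mk K)) (ev (mk K) (U t) + Du)) (at t within I)"
      by (rule ev_exp_deriv[OF that])
    moreover have "(\<lambda>s. ev (exp (s *\<^sub>R mk K)) (U s)) = Z" using Z_U by (simp add: E_def fun_eq_iff)
    ultimately show ?thesis by (simp add: ev_mk[OF K_lin] E_def)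
  qed
  have pw: "(\<exists>D. (W has_vector_derivative D) (at t within I) \<and> pr (Phi (gexp t xi) X) D = 0) \<longleftrightarrow>
            (\<exists>D. (Z has_vector_derivative D) (at t within I) \<and> pr X D = 0)" if tI: "t \<in> I" for t
  proof (cases "at t within I = bot")
    case True
    have "pr (Phi (gexp t xi) X) 0 = 0" using pr_lin[OF bhS] linear_0 by blast
    moreover have "pr X 0 = 0" using prX linear_0 by blast
    ultimately show ?thesis using hvd_bot[OF True] by blast
  next
    case nb: False
    have Kf: "K (U t) = pr X (f_xi xi (U t))" by (simp add: K_def UX[OF tI])
    show ?thesis
    proof
      assume "\<exists>D. (W has_vector_derivative D) (at t within I) \<and> pr (Phi (gexp t xi) X) D = 0"
      then obtain Dw where Dw: "(W has_vector_derivative Dw) (at t within I)"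
        and p0: "pr (Phi (gexp t xi) X) Dw = 0" by blast
      have "((\<lambda>s. Phi (gexp s (- xi)) (W s)) has_vector_derivative
          Phi (gexp t (- xi)) (f_xi (- xi) (W t) + Dw)) (at t within I)"
        by (rule moving_frame) (simp_all add: skew_neg sk1 sk2 Dw)
      moreover have "(\<lambda>s. Phi (gexp s (- xi)) (W s)) = U" by (simp add: fun_eq_iff U_W)
      ultimately obtain Du where Du: "(U has_vector_derivative Du) (at t within I)" by auto
      have Dw2: "(W has_vector_derivative Phi (gexp t xi) (f_xi xi (U t) + Du)) (at t within I)"
      proof -
        have "((\<lambda>s. Phi (gexp s xi) (U s)) has_vector_derivative
          Phi (gexp t xi) (f_xi xi (U t) + Du)) (at t within I)"
          by (rule moving_frame[OF sk1 sk2 Du])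
        moreover have "(\<lambda>s. Phi (gexp s xi) (U s)) = W" by (simp add: fun_eq_iff W_U)
        ultimately show ?thesis by simp
      qed
      have DwE: "Dw = Phi (gexp t xi) (f_xi xi (U t) + Du)"
        by (rule vector_derivative_unique_within[OF nb Dw Dw2])
      have DuX: "pr X Du = Du"
        using deriv_closed[OF bl_c tI nb _ Du] UX by simp
      have "Phi (gexp t xi) (pr X (f_xi xi (U t) + Du)) = 0"
        using p0 by (simp add: DwE pr_Phi[OF og])
      then have "pr X (f_xi xi (U t) + Du) = 0" by (rule Phi_inj)
      then have "K (U t) + Du = 0" by (simp add: Kf linear_add[OF prX] DuX)
      then have "E t (K (U t) + Du) = 0" using E_lin linear_0 by metis
      then show "\<exists>D. (Z has_vector_derivative D) (at t within I) \<and> pr X D = 0"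
        using Z_der[OF Du] prX linear_0 by metis
    next
      assume "\<exists>D. (Z has_vector_derivative D) (at t within I) \<and> pr X D = 0"
      then obtain Dz where Dz: "(Z has_vector_derivative Dz) (at t within I)"
        and p0: "pr X Dz = 0" by blast
      have "pr X Dz = Dz"
        using deriv_closed[OF bl_c tI nb _ Dz] ZX by simp
      then have Dz0: "Dz = 0" using p0 by simp
      have Du: "(U has_vector_derivative - K (U t)) (at t within I)"
        using U_der[OF Dz] by (simp add: Dz0 E_K[symmetric] linear_neg[OF E_lin] U_def)
      have "((\<lambda>s. Phi (gexp s xi) (U s)) has_vector_derivative
          Phi (gexp t xi) (f_xi xi (U t) + - K (U t))) (at t within I)"
        by (rule moving_frame[OF sk1 sk2 Du])
      moreover have "(\<lambda>s. Phi (gexp s xi) (U s)) = W" by (simp add: fun_eq_iff W_U)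
      ultimately have DW: "(W has_vector_derivative Phi (gexp t xi) (f_xi xi (U t) + - K (U t))) (at t within I)"
        by simp
      have "pr (Phi (gexp t xi) X) (Phi (gexp t xi) (f_xi xi (U t) + - K (U t))) = 0"
        by (simp add: pr_Phi[OF og] Kf linear_add[OF prX] linear_neg[OF prX] linear_diff[OF prX] pr_idem[OF X]
            linear_0[OF Phi_linear])
      then show "\<exists>D. (W has_vector_derivative D) (at t within I) \<and> pr (Phi (gexp t xi) X) D = 0"
        using DW by blast
    qed
  qed
  have memW: "\<forall>t\<in>I. W t \<in> SS (Phi (gexp t xi) X)" using ZS F_mem by (simp add: W_def)
  show "tangent_parallel euclid_metric I SS (\<lambda>t. Phi (gexp t xi) X) (\<lambda>t. F t (Z t)) \<longleftrightarrow>
      tangent_parallel euclid_metric I (\<lambda>_. SS X) c Z"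
    unfolding tangent_parallel_def W_def[symmetric]
    using memW ZS pw by (simp add: OP[OF bhS] OP[OF X])
qed


section \<open>Oriented integrals\<close>

lemma integral0_split:
  fixes g :: "real \<Rightarrow> 'a::banach"
  assumes g: "continuous_on UNIV g" and a: "a \<le> 0" "a \<le> x"
  shows "integral0 x g = integral {a..x} g - integral {a..0} g"
proof (cases "0 \<le> x")
  case True
  have "integral {a..0} g + integral {0..x} g = integral {a..x} g"
    by (rule Henstock_Kurzweil_Integration.integral_combine[OF a(1) True integrable_continuous_interval])
       (rule continuous_on_subset[OF g], simp)
  then show ?thesis using True by (simp add: integral0_def algebra_simps)
next
  case False
  have "integral {a..x} g + integral {x..0} g = integral {a..0} g"
    using False a
    by (intro Henstock_Kurzweil_Integration.integral_combine integrable_continuous_interval continuous_on_subset[OF g]) auto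
  then show ?thesis using False by (simp add: integral0_def algebra_simps)
qed

lemma integral0_deriv:
  fixes g :: "real \<Rightarrow> 'a::banach"
  assumes g: "continuous_on UNIV g"
  shows "((\<lambda>t. integral0 t g) has_vector_derivative g t) (at t within I)"
proof -
  define a where "a = min 0 t - 1"
  define b where "b = max 0 t + 1"
  have tab: "t \<in> {a<..<b}" by (simp add: a_def b_def min_def max_def)
  have "((\<lambda>u. integral {a..u} g) has_vector_derivative g t) (at t within {a..b})"
    by (rule integral_has_vector_derivative) (use tab in \<open>auto intro: continuous_on_subset[OF g]\<close>)
  moreover have "at t within {a..b} = at t"
    by (rule at_within_interior) (use tab in simp)
  ultimately have "((\<lambda>u. integral {a..u} g) has_vector_derivative g t) (at t)" by simp
  then have "((\<lambda>u. integral {a..u} g - integral {a..0} g) has_vector_derivative g t - 0) (at t)"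
    by (intro has_vector_derivative_diff) auto
  then have "((\<lambda>u. integral {a..u} g - integral {a..0} g) has_vector_derivative g t) (at t)"
    by simp
  then have "((\<lambda>u. integral0 u g) has_vector_derivative g t) (at t)"
    by (rule has_vector_derivative_transform_within_open[OF _ open_greaterThanLessThan tab])
       (subst integral0_split[OF g, of a], auto simp: a_def)
  then show ?thesis by (rule has_vector_derivative_at_within)
qed

lemma integral0_linear:
  fixes g :: "real \<Rightarrow> 'a::banach" and h :: "'a \<Rightarrow> 'b::banach"
  assumes h: "bounded_linear h" and g: "continuous_on UNIV g"
  shows "h (integral0 t g) = integral0 t (\<lambda>s. h (g s))"
proof -
  have i: "g integrable_on {u..v}" for u v
    by (rule integrable_continuous_interval[OF continuous_on_subset[OF g]]) simp
  show ?thesis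
    using integral_linear[OF i h, of 0 t] integral_linear[OF i h, of t 0]
    by (simp add: integral0_def o_def linear_neg[OF bounded_linear.linear[OF h]])
qed

lemma integral0_zero: "integral0 t (\<lambda>s. 0) = 0"
  by (simp add: integral0_def)


section \<open>Algebraic identities for the rolling data\<close>

definition skp :: "('n::finite,'k::finite) lalg \<Rightarrow> bool" where
  "skp y \<longleftrightarrow> skew (fst y) \<and> skew (snd y)"

lemmas mr = mm_simps matrix_mul_assoc[symmetric]

lemma dip_diff: "d_iota_pi X (a - b) = d_iota_pi X a - d_iota_pi X b"
  by (simp add: d_iota_pi_def mm_simps)
lemma dip_linear: "linear (d_iota_pi X)"
  by (simp add: linear_iff d_iota_pi_def mm_simps algebra_simps)
lemma dipinv_linear: "linear (d_iota_pi_inv X)"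
  by (simp add: linear_iff d_iota_pi_inv_def mm_simps algebra_simps)

context
  fixes X :: "real^'k::finite^'n::finite"
  assumes X: "X \<in> stiefel"
begin

lemma XtX: "transpose X ** X = mat 1" using X by (simp add: stiefel_def)
lemma XtX': "transpose X ** (X ** M) = M" by (simp add: matrix_mul_assoc XtX)

lemma tan_rule:
  assumes "P_perp X V = 0"
  shows "transpose V ** X = - (transpose X ** V)" "transpose V ** (X ** M) = - (transpose X ** (V ** M))"
proof -
  have "transpose X ** V + transpose V ** X = 0" using assms tangent_iff[OF X] by (simp add: stiefel_tangent_def)
  then show 1: "transpose V ** X = - (transpose X ** V)" by (simp add: eq_neg_iff_add_eq_0 add.commute)
  show "transpose V ** (X ** M) = - (transpose X ** (V ** M))"
    by (simp add: matrix_mul_assoc 1 mm_simps)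
qed

lemma dip_tan: "skp y \<Longrightarrow> P_perp X (d_iota_pi X y) = 0"
  by (simp add: tangent_iff[OF X, symmetric] stiefel_tangent_def d_iota_pi_def skp_def skew_def mr XtX' XtX)

lemma dipinv_skp: "P_perp X V = 0 \<Longrightarrow> skp (d_iota_pi_inv X V)"
  by (simp add: skp_def skew_def d_iota_pi_inv_def mm_simps tan_rule)

lemma dip_dipinv: "P_perp X V = 0 \<Longrightarrow> d_iota_pi X (d_iota_pi_inv X V) = V"
  by (simp add: d_iota_pi_def d_iota_pi_inv_def mr XtX' XtX tan_rule)

lemma pr_p_eq: "skp y \<Longrightarrow> pr_p X y = d_iota_pi_inv X (d_iota_pi X y)"
  by (simp add: pr_p_def d_iota_pi_def d_iota_pi_inv_def skp_def skew_def mr XtX' XtX prod_eq_iff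
      scaleR_2 algebra_simps)

lemma step1:
  assumes A: "skew A" and B: "skew B" and h: "A ** X = X ** B"
  shows "lie_br (A, B) (d_iota_pi_inv X V) = d_iota_pi_inv X (f_xi (A, B) V)"
proof -
  have h': "A ** (X ** M) = X ** (B ** M)" for M :: "real^'p^'k" by (simp add: matrix_mul_assoc h)
  have g: "transpose X ** A = B ** transpose X"
  proof -
    have "transpose (A ** X) = transpose (X ** B)" by (simp add: h)
    then show ?thesis using A B by (simp add: matrix_transpose_mul skew_def mm_simps)
  qed
  have g': "transpose X ** (A ** M) = B ** (transpose X ** M)" for M :: "real^'p^'n"
    by (simp add: matrix_mul_assoc g)
  show ?thesis
    using A B by (simp add: lie_br_def d_iota_pi_inv_def f_xi_def skew_def mr h h' g g' prod_eq_iff algebra_simps)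
qed

lemma step2:
  assumes A: "skew A" and B: "skew B" and h: "A ** X = X ** B" and V: "P_perp X V = 0"
  shows "P_perp X (f_xi (A, B) V) = 0"
proof -
  have h': "A ** (X ** M) = X ** (B ** M)" for M :: "real^'p^'k" by (simp add: matrix_mul_assoc h)
  have g: "transpose X ** A = B ** transpose X"
  proof -
    have "transpose (A ** X) = transpose (X ** B)" by (simp add: h)
    then show ?thesis using A B by (simp add: matrix_transpose_mul skew_def mm_simps)
  qed
  have g': "transpose X ** (A ** M) = B ** (transpose X ** M)" for M :: "real^'p^'n"
    by (simp add: matrix_mul_assoc g)
  have "transpose X ** f_xi (A, B) V + transpose (f_xi (A, B) V) ** X = 0"
    using A B by (simp add: f_xi_def skew_def mr h h' g g' tan_rule[OF V] algebra_simps)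
  then show ?thesis by (simp add: tangent_iff[OF X, symmetric] stiefel_tangent_def)
qed

lemma step3:
  assumes W: "P_perp X W = 0" and V: "P_perp X V = 0"
  shows "d_iota_pi X (lie_br (d_iota_pi_inv X W) (d_iota_pi_inv X V)) =
    2 *\<^sub>R (f_xi (d_iota_pi_inv X W) V - P_perp X (f_xi (d_iota_pi_inv X W) V))"
proof -
  let ?E = "W ** (transpose X ** V) + W ** (transpose X ** V) - X ** (transpose W ** V)
     - V ** (transpose X ** W) - V ** (transpose X ** W) + X ** (transpose V ** W)"
  have 1: "d_iota_pi X (lie_br (d_iota_pi_inv X W) (d_iota_pi_inv X V)) = ?E"
    by (simp add: lie_br_def d_iota_pi_def d_iota_pi_inv_def mr XtX XtX' tan_rule[OF V] tan_rule[OF W]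
        algebra_simps)
  have 2: "2 *\<^sub>R (f_xi (d_iota_pi_inv X W) V - P_perp X (f_xi (d_iota_pi_inv X W) V)) = ?E"
    by (simp add: f_xi_def P_perp_def d_iota_pi_inv_def mr XtX XtX' tan_rule[OF V] tan_rule[OF W]
        scaleR_2 algebra_simps)
  show ?thesis using 1 2 by simp
qed

end


lemma skew_diff: "skew A \<Longrightarrow> skew B \<Longrightarrow> skew (A - B)"
  by (simp add: skew_def tr_diff)

lemma lie_skp: "skp a \<Longrightarrow> skp b \<Longrightarrow> skp (lie_br a b)"
  by (simp add: skp_def skew_def lie_br_def tr_diff matrix_transpose_mul mm_simps)

lemma f_xi_add_xi: "f_xi (a + b) V = f_xi a V + f_xi b V"
  by (simp add: f_xi_def mm_simps algebra_simps)

lemma ad_linear: "linear (ad x)"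
  by (simp add: linear_iff ad_def lie_br_def mm_simps algebra_simps prod_eq_iff)

lemma pr_p_linear: "linear (pr_p X)"
  by (simp add: linear_iff pr_p_def mm_simps algebra_simps prod_eq_iff)

lemma Lop_linear: "linear (Lop X xi)"
proof -
  have "linear (\<lambda>y. ad (xi_h X xi) y + (1/2) *\<^sub>R pr_p X (ad (xi_p X xi) y))"
    by (intro linear_compose_add lin_sc[of "\<lambda>y. pr_p X (ad (xi_p X xi) y)", unfolded o_def]
        ad_linear linear_compose[OF ad_linear pr_p_linear, unfolded o_def])
  then show ?thesis by (simp add: Lop_def[abs_def])
qed

context
  fixes X :: "real^'k::finite^'n::finite" and xi :: "('n,'k) lalg"
  assumes X: "X \<in> stiefel" and sk1: "skew (fst xi)" and sk2: "skew (snd xi)"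
begin

lemma xi_skp: "skp xi" using sk1 sk2 by (simp add: skp_def)

lemma W0_tan: "P_perp X (d_iota_pi X xi) = 0" by (rule dip_tan[OF X xi_skp])

lemma xip_eq: "xi_p X xi = d_iota_pi_inv X (d_iota_pi X xi)"
  by (simp add: xi_p_def pr_p_eq[OF X xi_skp])

lemma xip_skp: "skp (xi_p X xi)"
  by (simp add: xip_eq dipinv_skp[OF X W0_tan])

lemma xih_skp: "skp (xi_h X xi)"
  using xi_skp xip_skp by (simp add: skp_def xi_h_def skew_diff)

lemma xih_cond: "fst (xi_h X xi) ** X = X ** snd (xi_h X xi)"
proof -
  have "d_iota_pi X (xi_h X xi) = 0"
    by (simp add: xi_h_def dip_diff xip_eq dip_dipinv[OF X W0_tan])
  then show ?thesis by (simp add: d_iota_pi_def)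
qed

lemma Lop_key:
  assumes V: "P_perp X V = 0"
  shows "Lop X xi (d_iota_pi_inv X V) = d_iota_pi_inv X (f_xi xi V - P_perp X (f_xi xi V))"
proof -
  let ?h = "xi_h X xi" and ?p = "xi_p X xi" and ?y = "d_iota_pi_inv X V"
  let ?W0 = "d_iota_pi X xi"
  have 1: "ad ?h ?y = d_iota_pi_inv X (f_xi ?h V)"
  proof -
    have "lie_br (fst ?h, snd ?h) ?y = d_iota_pi_inv X (f_xi (fst ?h, snd ?h) V)"
      using xih_skp xih_cond by (intro step1[OF X]) (simp_all add: skp_def)
    then show ?thesis by (simp add: ad_def)
  qed
  have 2: "pr_p X (ad ?p ?y) = d_iota_pi_inv X (2 *\<^sub>R (f_xi ?p V - P_perp X (f_xi ?p V)))"
  proof -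
    have "pr_p X (ad ?p ?y) = d_iota_pi_inv X (d_iota_pi X (lie_br ?p ?y))"
      by (simp add: ad_def pr_p_eq[OF X] lie_skp xip_skp dipinv_skp[OF X V])
    also have "d_iota_pi X (lie_br ?p ?y) = 2 *\<^sub>R (f_xi ?p V - P_perp X (f_xi ?p V))"
      unfolding xip_eq by (rule step3[OF X W0_tan V])
    finally show ?thesis .
  qed
  have 3: "P_perp X (f_xi ?h V) = 0"
  proof -
    have "P_perp X (f_xi (fst ?h, snd ?h) V) = 0"
      using xih_skp xih_cond by (intro step2[OF X _ _ _ V]) (simp_all add: skp_def)
    then show ?thesis by simp
  qed
  have 4: "f_xi xi V = f_xi ?h V + f_xi ?p V"
    by (simp add: xi_h_def f_xi_add_xi[symmetric])
  have "Lop X xi ?y = d_iota_pi_inv X (f_xi ?h V) + (1/2) *\<^sub>R d_iota_pi_inv X (2 *\<^sub>R (f_xi ?p V - P_perp X (f_xi ?p V)))"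
    by (simp add: Lop_def 1 2)
  also have "\<dots> = d_iota_pi_inv X (f_xi ?h V + (f_xi ?p V - P_perp X (f_xi ?p V)))"
    by (simp add: linear_add[OF dipinv_linear] linear_scale[OF dipinv_linear])
  also have "f_xi ?h V + (f_xi ?p V - P_perp X (f_xi ?p V)) = f_xi xi V - P_perp X (f_xi xi V)"
    by (simp add: 4 P_perp_add 3)
  finally show ?thesis .
qed

end


lemma ev_exp_cont: "continuous_on UNIV (\<lambda>s. ev (exp (s *\<^sub>R a)) v)"
  by (rule continuous_at_imp_continuous_on)
     (use has_vector_derivative_continuous[OF ev_exp_deriv_left[where T=UNIV]] in auto)

lemma lin_iso_cong:
  assumes eq: "\<And>x. x \<in> S \<Longrightarrow> F x = F' x"
    and cl: "\<And>x y a b. x \<in> S \<Longrightarrow> y \<in> S \<Longrightarrow> a *\<^sub>R x + b *\<^sub>R y \<in> S"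
    and li: "lin_isometry g S S' F'"
  shows "lin_isometry g S S' F"
  unfolding lin_isometry_def
proof (intro conjI ballI allI)
  fix x y a b assume x: "x \<in> S" and y: "y \<in> S"
  show "F (a *\<^sub>R x + b *\<^sub>R y) = a *\<^sub>R F x + b *\<^sub>R F y"
    using li x y cl[OF x y] by (simp add: lin_isometry_def eq)
  show "g (F x) (F y) = g x y" using li x y by (simp add: lin_isometry_def eq)
next
  have "F ` S = F' ` S" by (rule image_cong[OF refl eq])
  then show "F ` S = S'" using li by (simp add: lin_isometry_def)
qed

lemma tp_cong:
  assumes "\<And>t. t \<in> I \<Longrightarrow> Z t = Z' t"
  shows "tangent_parallel g I TM c Z = tangent_parallel g I TM c Z'"
proof -
  have "(Z has_vector_derivative D) (at t within I) = (Z' has_vector_derivative D) (at t within I)"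
    if "t \<in> I" for t D
    using has_vector_derivative_transform[OF that, of Z' Z] has_vector_derivative_transform[OF that, of Z Z']
      assms by metis
  then show ?thesis unfolding tangent_parallel_def using assms by auto
qed

context
  fixes X :: "real^'k::finite^'n::finite" and xi :: "('n,'k) lalg"
  assumes X: "X \<in> stiefel" and sk1: "skew (fst xi)" and sk2: "skew (snd xi)"
begin

lemma xih_sk1: "skew (fst (xi_h X xi))" using xih_skp[OF X sk1 sk2] by (simp add: skp_def)
lemma xih_sk2: "skew (snd (xi_h X xi))" using xih_skp[OF X sk1 sk2] by (simp add: skp_def)

lemma Bsimp: "Phi (roll_q X xi t) (d_iota_pi X (Ad (gexp t (xi_h X xi)) y)) = Phi (gexp t xi) (d_iota_pi X y)"
proof -
  define A where "A = fst (xi_h X xi)"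
  define B where "B = snd (xi_h X xi)"
  have skA: "skew A" and skB: "skew B" using xih_sk1 xih_sk2 by (simp_all add: A_def B_def)
  have h: "A ** X = X ** B" using xih_cond[OF X sk1 sk2] by (simp add: A_def B_def)
  define H1 where "H1 = mexp (t *\<^sub>R A)"
  define H1' where "H1' = mexp ((- t) *\<^sub>R A)"
  define H2 where "H2 = mexp (t *\<^sub>R B)"
  define H2' where "H2' = mexp ((- t) *\<^sub>R B)"
  have q: "roll_q X xi t = (mexp (t *\<^sub>R fst xi) ** H1', mexp (t *\<^sub>R snd xi) ** H2')"
    by (simp only: roll_q_def H1'_def H2'_def A_def B_def)
  have Ad: "Ad (gexp t (xi_h X xi)) y = (H1 ** fst y ** H1', H2 ** snd y ** H2')"
    by (simp only: Ad_def gexp_def H1_def H1'_def H2_def H2'_def A_def B_def mexp_matrix_inv fst_conv snd_conv)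
  have i1: "H1' ** (H1 ** M) = M" for M :: "real^'p^'n"
    by (simp only: H1_def H1'_def matrix_mul_assoc mexp_inv' matrix_mul_lid)
  have i2: "H2' ** H2 = mat 1" by (simp only: H2_def H2'_def mexp_inv')
  have i2': "H2' ** (H2 ** M) = M" for M :: "real^'p^'k" by (simp add: matrix_mul_assoc i2)
  have tH2': "transpose H2' = H2"
    using mexp_transpose[OF skB, of "- t"] by (simp add: H2_def H2'_def)
  have int: "H1' ** X = X ** H2'"
    unfolding H1'_def H2'_def by (rule mexp_intertwine) (simp add: mm_scale_l mm_scale_r mm_neg_l mm_neg_r h)
  have int': "H1' ** (X ** M) = X ** (H2' ** M)" for M :: "real^'p^'k"
    by (simp add: matrix_mul_assoc int)
  show ?thesis
    unfolding Ad by (simp add: q Phi_def gexp_def d_iota_pi_def mr tH2' i1 i2 i2' int int')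
qed

lemma Csimp: "Phi (roll_q X xi t) (Phi (gexp t (xi_h X xi)) W) = Phi (gexp t xi) W"
proof -
  define A where "A = fst (xi_h X xi)"
  define B where "B = snd (xi_h X xi)"
  have skA: "skew A" and skB: "skew B" using xih_sk1 xih_sk2 by (simp_all add: A_def B_def)
  define H1 where "H1 = mexp (t *\<^sub>R A)"
  define H1' where "H1' = mexp ((- t) *\<^sub>R A)"
  define H2 where "H2 = mexp (t *\<^sub>R B)"
  define H2' where "H2' = mexp ((- t) *\<^sub>R B)"
  have q: "roll_q X xi t = (mexp (t *\<^sub>R fst xi) ** H1', mexp (t *\<^sub>R snd xi) ** H2')"
    by (simp only: roll_q_def H1'_def H2'_def A_def B_def)
  have g: "gexp t (xi_h X xi) = (H1, H2)" by (simp add: gexp_def H1_def H2_def A_def B_def)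
  have i1: "H1' ** (H1 ** M) = M" for M :: "real^'p^'n"
    by (simp only: H1_def H1'_def matrix_mul_assoc mexp_inv' matrix_mul_lid)
  have tH2': "transpose H2' = H2"
    using mexp_transpose[OF skB, of "- t"] by (simp add: H2_def H2'_def)
  have tH2: "transpose H2 = H2'"
    using mexp_transpose[OF skB, of t] by (simp add: H2_def H2'_def)
  have i2: "H2' ** H2 = mat 1" by (simp only: H2_def H2'_def mexp_inv')
  have i2': "H2' ** (H2 ** M) = M" for M :: "real^'k^'k" by (simp add: matrix_mul_assoc i2)
  show ?thesis
    unfolding g q by (simp add: Phi_def gexp_def mr tH2' tH2 i1 i2 i2')
qed

end


definition tpr :: "real^'k::finite^'n::finite \<Rightarrow> real^'k^'n \<Rightarrow> real^'k^'n" where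
  "tpr Y V = V - P_perp Y V"

definition KT :: "real^'k::finite^'n::finite \<Rightarrow> ('n,'k) lalg \<Rightarrow> real^'k^'n \<Rightarrow> real^'k^'n" where
  "KT X xi = (\<lambda>V. tpr X (f_xi xi (tpr X V)))"

definition KN :: "real^'k::finite^'n::finite \<Rightarrow> ('n,'k) lalg \<Rightarrow> real^'k^'n \<Rightarrow> real^'k^'n" where
  "KN X xi = (\<lambda>V. P_perp X (f_xi xi (P_perp X V)))"

definition FT :: "real^'k::finite^'n::finite \<Rightarrow> ('n,'k) lalg \<Rightarrow> real \<Rightarrow> real^'k^'n \<Rightarrow> real^'k^'n" where
  "FT X xi = (\<lambda>t V. Phi (gexp t xi) (ev (exp ((- t) *\<^sub>R mk (KT X xi))) V))"

definition FN :: "real^'k::finite^'n::finite \<Rightarrow> ('n,'k) lalg \<Rightarrow> real \<Rightarrow> real^'k^'n \<Rightarrow> real^'k^'n" where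
  "FN X xi = (\<lambda>t V. Phi (gexp t xi) (ev (exp ((- t) *\<^sub>R mk (KN X xi))) V))"

lemma tpr_linear: "linear (tpr Y)"
  by (simp add: linear_iff tpr_def P_perp_add P_perp_scale algebra_simps)
lemma tpr_bl: "bounded_linear (tpr Y)"
  using tpr_linear linear_conv_bounded_linear by blast
lemma KT_linear: "linear (KT X xi)"
  using linear_compose[OF linear_compose[OF tpr_linear f_xi_linear] tpr_linear]
  by (simp add: KT_def o_def)
lemma KN_linear: "linear (KN X xi)"
  using linear_compose[OF linear_compose[OF P_perp_linear f_xi_linear] P_perp_linear]
  by (simp add: KN_def o_def)
lemma PF_linear: "linear (\<lambda>V. P_perp X (f_xi xi V))"
  using linear_compose[OF f_xi_linear P_perp_linear] by (simp add: o_def)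
lemma dipinv_bl: "bounded_linear (d_iota_pi_inv X)"
  using dipinv_linear linear_conv_bounded_linear by blast
lemma dip_bl: "bounded_linear (d_iota_pi X)"
  using dip_linear linear_conv_bounded_linear by blast

context
  fixes X :: "real^'k::finite^'n::finite" and xi :: "('n,'k) lalg"
  assumes X: "X \<in> stiefel" and sk1: "skew (fst xi)" and sk2: "skew (snd xi)"
begin

lemma tpr_idem: "Y \<in> stiefel \<Longrightarrow> tpr Y (tpr Y V) = tpr Y V"
  by (simp add: tpr_def P_perp_diff P_idem)
lemma P_tpr: "P_perp X (tpr X V) = 0"
  by (simp add: tpr_def P_perp_diff P_idem[OF X])

lemma KT_P: "P_perp X (KT X xi v) = 0" by (simp add: KT_def P_tpr)

lemma eKT_tan: "P_perp X V = 0 \<Longrightarrow> P_perp X (ev (exp (s *\<^sub>R mk (KT X xi))) V) = 0"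
proof -
  assume V: "P_perp X V = 0"
  have "P_perp X (ev (exp (s *\<^sub>R mk (KT X xi))) V) = P_perp X V"
    by (rule exp_kill_s[OF KT_linear P_perp_bl]) (rule KT_P)
  then show ?thesis using V by simp
qed

lemma D_intertwine:
  "d_iota_pi_inv X (tpr X (ev (exp (s *\<^sub>R mk (KT X xi))) v)) =
   ev (exp (s *\<^sub>R mk (Lop X xi))) (d_iota_pi_inv X (tpr X v))"
proof -
  have bl: "bounded_linear (\<lambda>V. d_iota_pi_inv X (tpr X V))"
    using bounded_linear_compose[OF dipinv_bl tpr_bl] .
  show ?thesis
  proof (rule exp_intertwine_s[OF KT_linear Lop_linear bl])
    fix v
    have "Lop X xi (d_iota_pi_inv X (tpr X v)) = d_iota_pi_inv X (tpr X (f_xi xi (tpr X v)))"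
      using Lop_key[OF X sk1 sk2 P_tpr, of v] by (simp add: tpr_def)
    then show "d_iota_pi_inv X (tpr X (KT X xi v)) = Lop X xi (d_iota_pi_inv X (tpr X v))"
      by (simp add: KT_def tpr_idem[OF X])
  qed
qed

lemma tpr_tan: "P_perp X V = 0 \<Longrightarrow> tpr X V = V" by (simp add: tpr_def)

lemma dipinv_eKT:
  assumes V: "P_perp X V = 0"
  shows "ev (exp (s *\<^sub>R mk (Lop X xi))) (d_iota_pi_inv X V) = d_iota_pi_inv X (ev (exp (s *\<^sub>R mk (KT X xi))) V)"
  using D_intertwine[of s V] by (simp add: tpr_tan[OF V] tpr_tan[OF eKT_tan[OF V]])

lemma B_eq:
  assumes V: "P_perp X V = 0"
  shows "roll_B X xi t V = FT X xi t V"
proof -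
  have "roll_B X xi t V = Phi (gexp t xi) (d_iota_pi X (op_exp (\<lambda>y. (- t) *\<^sub>R Lop X xi y) (d_iota_pi_inv X V)))"
    by (simp add: roll_B_def roll_S_def Bsimp[OF X sk1 sk2])
  also have "\<dots> = Phi (gexp t xi) (d_iota_pi X (d_iota_pi_inv X (ev (exp ((- t) *\<^sub>R mk (KT X xi))) V)))"
    by (simp only: op_exp_scaled[OF Lop_linear] dipinv_eKT[OF V])
  also have "\<dots> = FT X xi t V"
    by (simp only: dip_dipinv[OF X eKT_tan[OF V]] FT_def)
  finally show ?thesis .
qed

lemma C_eq:
  assumes V: "P_perp X V = V"
  shows "roll_C X xi t V = FN X xi t V"
proof -
  let ?a = "mk (KN X xi)"
  have "roll_C X xi t V = Phi (gexp t xi) (op_exp (\<lambda>V. (- t) *\<^sub>R P_perp X (f_xi xi V)) V)"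
    by (simp add: roll_C_def roll_T_def Csimp[OF X sk1 sk2])
  also have "\<dots> = Phi (gexp t xi) (ev (exp ((- t) *\<^sub>R mk (\<lambda>V. P_perp X (f_xi xi V)))) V)"
    using op_exp_scaled[OF PF_linear, of "- t" X xi V] by simp
  also have "ev (exp ((- t) *\<^sub>R mk (\<lambda>V. P_perp X (f_xi xi V)))) V = ev (exp ((- t) *\<^sub>R ?a)) V"
  proof -
    have 1: "P_perp X (ev (exp ((- t) *\<^sub>R ?a)) V) = ev (exp ((- t) *\<^sub>R mk (\<lambda>V. P_perp X (f_xi xi V)))) (P_perp X V)"
      by (rule exp_intertwine_s[OF KN_linear PF_linear P_perp_bl]) (simp add: KN_def P_idem[OF X])
    have 2: "tpr X (ev (exp ((- t) *\<^sub>R ?a)) V) = tpr X V"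
      by (rule exp_kill_s[OF KN_linear tpr_bl]) (simp add: KN_def tpr_def P_idem[OF X])
    have "tpr X V = 0" using V by (simp add: tpr_def)
    then have "P_perp X (ev (exp ((- t) *\<^sub>R ?a)) V) = ev (exp ((- t) *\<^sub>R ?a)) V"
      using 2 by (simp add: tpr_def)
    then show ?thesis using 1 V by simp
  qed
  finally show ?thesis by (simp add: FN_def)
qed

definition W0 where "W0 = d_iota_pi X xi"

lemma W0_tan': "P_perp X W0 = 0" by (simp add: W0_def W0_tan[OF X sk1 sk2])

lemma alpha_int: "op_exp (\<lambda>y. s *\<^sub>R Lop X xi y) (xi_p X xi) = d_iota_pi_inv X (ev (exp (s *\<^sub>R mk (KT X xi))) W0)"
  by (simp add: op_exp_scaled[OF Lop_linear] xip_eq[OF X sk1 sk2] W0_def[symmetric] dipinv_eKT[OF W0_tan'])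

lemma beta_eq: "roll_beta X xi t = integral0 t (\<lambda>s. ev (exp (s *\<^sub>R mk (KT X xi))) W0)"
proof -
  have c: "continuous_on UNIV (\<lambda>s. d_iota_pi_inv X (ev (exp (s *\<^sub>R mk (KT X xi))) W0))"
    by (rule bounded_linear.continuous_on[OF dipinv_bl ev_exp_cont])
  have "roll_beta X xi t = d_iota_pi X (integral0 t (\<lambda>s. d_iota_pi_inv X (ev (exp (s *\<^sub>R mk (KT X xi))) W0)))"
    by (simp add: roll_beta_def roll_alpha_def alpha_int)
  also have "\<dots> = integral0 t (\<lambda>s. d_iota_pi X (d_iota_pi_inv X (ev (exp (s *\<^sub>R mk (KT X xi))) W0)))"
    by (rule integral0_linear[OF dip_bl c])
  also have "\<dots> = integral0 t (\<lambda>s. ev (exp (s *\<^sub>R mk (KT X xi))) W0)"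
    by (simp add: dip_dipinv[OF X eKT_tan[OF W0_tan']])
  finally show ?thesis .
qed

lemma beta_deriv: "(roll_beta X xi has_vector_derivative ev (exp (t *\<^sub>R mk (KT X xi))) W0) (at t within I)"
proof -
  have "roll_beta X xi = (\<lambda>t. integral0 t (\<lambda>s. ev (exp (s *\<^sub>R mk (KT X xi))) W0))"
    by (simp add: fun_eq_iff beta_eq)
  then show ?thesis by (simp add: integral0_deriv[OF ev_exp_cont])
qed

lemma beta_tan: "roll_beta X xi t \<in> stiefel_tangent X"
proof -
  have "P_perp X (roll_beta X xi t) = integral0 t (\<lambda>s. P_perp X (ev (exp (s *\<^sub>R mk (KT X xi))) W0))"
    by (simp add: beta_eq integral0_linear[OF P_perp_bl ev_exp_cont])
  also have "\<dots> = 0" by (simp add: eKT_tan[OF W0_tan'] integral0_zero)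
  finally show ?thesis by (simp add: tangent_iff[OF X])
qed

lemma bh_deriv: "(roll_beta_hat X xi has_vector_derivative Phi (gexp t xi) (f_xi xi X)) (at t within I)"
proof -
  have "((\<lambda>s. Phi (gexp s xi) X) has_vector_derivative Phi (gexp t xi) (f_xi xi X + 0)) (at t within I)"
    by (rule moving_frame[OF sk1 sk2]) simp
  moreover have "roll_beta_hat X xi = (\<lambda>s. Phi (gexp s xi) X)" by (simp add: fun_eq_iff roll_beta_hat_def)
  ultimately show ?thesis by simp
qed

lemma B_vel: "roll_B X xi t (ev (exp (t *\<^sub>R mk (KT X xi))) W0) = Phi (gexp t xi) (f_xi xi X)"
proof -
  have "roll_B X xi t (ev (exp (t *\<^sub>R mk (KT X xi))) W0) = Phi (gexp t xi) W0"
    using ev_exp_inv[of "- t" "mk (KT X xi)" W0] by (simp add: B_eq[OF eKT_tan[OF W0_tan']] FT_def)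
  then show ?thesis by (simp add: W0_def d_iota_pi_def f_xi_def)
qed

end


theorem proposition5p18:
  fixes X :: "real^'k::finite^'n::finite" and xi :: "('n,'k) lalg" and I :: "real set"
  assumes "skew (fst xi)" and "skew (snd xi)"
    and "X \<in> stiefel"
    and "is_interval I"
  shows "extrinsic_rolling euclid_metric I
           (stiefel_tangent X) (\<lambda>_. stiefel_tangent X) (\<lambda>_. stiefel_normal X)
           stiefel stiefel_tangent stiefel_normal
           (roll_beta X xi) (roll_beta_hat X xi) (roll_B X xi) (roll_C X xi)"
proof -
  note sk1 = assms(1) and sk2 = assms(2) and X = assms(3)
  have og: "orthp (gexp t xi)" for t by (rule orthp_gexp[OF sk1 sk2])
  have bh: "roll_beta_hat X xi t = Phi (gexp t xi) X" for t by (simp add: roll_beta_hat_def)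
  have bh_fun: "roll_beta_hat X xi = (\<lambda>t. Phi (gexp t xi) X)" by (simp add: fun_eq_iff bh)
    have T_iso: "lin_isometry euclid_metric (stiefel_tangent X) (stiefel_tangent (Phi (gexp t xi) X)) (FT X xi t)"
    and T_par: "\<And>Z c. (\<forall>t\<in>I. Z t \<in> stiefel_tangent X) \<Longrightarrow>
      tangent_parallel euclid_metric I stiefel_tangent (\<lambda>t. Phi (gexp t xi) X) (\<lambda>t. FT X xi t (Z t)) \<longleftrightarrow>
      tangent_parallel euclid_metric I (\<lambda>_. stiefel_tangent X) c Z" for t
  proof -
    have a1: "linear (tpr Y)" for Y :: "real^'k^'n" by (rule tpr_linear)
    have a2: "Y \<in> stiefel \<Longrightarrow> tpr Y (tpr Y V) = tpr Y V" for Y V by (simp add: tpr_def P_perp_diff P_idem)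
    have a3: "Y \<in> stiefel \<Longrightarrow> tpr Y a \<bullet> b = a \<bullet> tpr Y b" for Y a b
      by (simp add: tpr_def inner_diff_left inner_diff_right P_sym)
    have a4: "orthp g \<Longrightarrow> tpr (Phi g X) (Phi g V) = Phi g (tpr X V)" for g V
      by (simp add: tpr_def Phi_P linear_diff[OF Phi_linear])
    have a5: "Y \<in> stiefel \<Longrightarrow> stiefel_tangent Y = {V. tpr Y V = V}" for Y
      by (auto simp: tpr_def tangent_iff)
    have a6: "Y \<in> stiefel \<Longrightarrow> orth_proj euclid_metric (stiefel_tangent Y) D = tpr Y D" for Y D
      by (simp add: orth_proj_tangent tpr_def)
    have a7: "KT X xi = (\<lambda>V. tpr X (f_xi xi (tpr X V)))" by (simp add: KT_def)
    have a8: "FT X xi = (\<lambda>t V. Phi (gexp t xi) (ev (exp ((- t) *\<^sub>R mk (KT X xi))) V))" by (simp add: FT_def)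
    show "lin_isometry euclid_metric (stiefel_tangent X) (stiefel_tangent (Phi (gexp t xi) X)) (FT X xi t)"
      by (rule rolling_generic_iso[where pr=tpr, OF sk1 sk2 X a1 a2 a3 a4 a5 a6 a7 a8])
    fix Z :: "real \<Rightarrow> real^'k^'n" and c :: "real \<Rightarrow> real^'k^'n"
    assume ZZ: "\<forall>t\<in>I. Z t \<in> stiefel_tangent X"
    show "tangent_parallel euclid_metric I stiefel_tangent (\<lambda>t. Phi (gexp t xi) X) (\<lambda>t. FT X xi t (Z t)) \<longleftrightarrow>
      tangent_parallel euclid_metric I (\<lambda>_. stiefel_tangent X) c Z"
      by (rule rolling_generic_par[where pr=tpr, OF sk1 sk2 X a1 a2 a3 a4 a5 a6 a7 a8]) (simp_all add: ZZ)
  qed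
    have N_iso: "lin_isometry euclid_metric (stiefel_normal X) (stiefel_normal (Phi (gexp t xi) X)) (FN X xi t)"
    and N_par: "\<And>Z c. (\<forall>t\<in>I. Z t \<in> stiefel_normal X) \<Longrightarrow>
      tangent_parallel euclid_metric I stiefel_normal (\<lambda>t. Phi (gexp t xi) X) (\<lambda>t. FN X xi t (Z t)) \<longleftrightarrow>
      tangent_parallel euclid_metric I (\<lambda>_. stiefel_normal X) c Z" for t
  proof -
    have a1: "linear (P_perp Y)" for Y :: "real^'k^'n" by (rule P_perp_linear)
    have a2: "Y \<in> stiefel \<Longrightarrow> P_perp Y (P_perp Y V) = P_perp Y V" for Y V by (simp add: P_idem)
    have a3: "Y \<in> stiefel \<Longrightarrow> P_perp Y a \<bullet> b = a \<bullet> P_perp Y b" for Y a b by (simp add: P_sym)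
    have a4: "orthp g \<Longrightarrow> P_perp (Phi g X) (Phi g V) = Phi g (P_perp X V)" for g V by (simp add: Phi_P)
    have a5: "Y \<in> stiefel \<Longrightarrow> stiefel_normal Y = {V. P_perp Y V = V}" for Y
      by (auto simp: normal_iff)
    have a6: "Y \<in> stiefel \<Longrightarrow> orth_proj euclid_metric (stiefel_normal Y) D = P_perp Y D" for Y D
      by (simp add: orth_proj_normal)
    have a7: "KN X xi = (\<lambda>V. P_perp X (f_xi xi (P_perp X V)))" by (simp add: KN_def)
    have a8: "FN X xi = (\<lambda>t V. Phi (gexp t xi) (ev (exp ((- t) *\<^sub>R mk (KN X xi))) V))" by (simp add: FN_def)
    show "lin_isometry euclid_metric (stiefel_normal X) (stiefel_normal (Phi (gexp t xi) X)) (FN X xi t)"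
      by (rule rolling_generic_iso[where pr=P_perp, OF sk1 sk2 X a1 a2 a3 a4 a5 a6 a7 a8])
    fix Z :: "real \<Rightarrow> real^'k^'n" and c :: "real \<Rightarrow> real^'k^'n"
    assume ZZ: "\<forall>t\<in>I. Z t \<in> stiefel_normal X"
    show "tangent_parallel euclid_metric I stiefel_normal (\<lambda>t. Phi (gexp t xi) X) (\<lambda>t. FN X xi t (Z t)) \<longleftrightarrow>
      tangent_parallel euclid_metric I (\<lambda>_. stiefel_normal X) c Z"
      by (rule rolling_generic_par[where pr=P_perp, OF sk1 sk2 X a1 a2 a3 a4 a5 a6 a7 a8]) (simp_all add: ZZ)
  qed
  have clT: "a *\<^sub>R x + b *\<^sub>R y \<in> stiefel_tangent X" if "x \<in> stiefel_tangent X" "y \<in> stiefel_tangent X" for x y a b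
    using that by (simp add: tangent_iff[OF X] P_perp_add P_perp_scale)
  have clN: "a *\<^sub>R x + b *\<^sub>R y \<in> stiefel_normal X" if "x \<in> stiefel_normal X" "y \<in> stiefel_normal X" for x y a b
    using that by (simp add: normal_iff[OF X] P_perp_add P_perp_scale)
  have BT: "x \<in> stiefel_tangent X \<Longrightarrow> roll_B X xi t x = FT X xi t x" for t x
    by (rule B_eq[OF X sk1 sk2]) (simp add: tangent_iff[OF X])
  have CN: "x \<in> stiefel_normal X \<Longrightarrow> roll_C X xi t x = FN X xi t x" for t x
    by (rule C_eq[OF X sk1 sk2]) (simp add: normal_iff[OF X])
  show ?thesis
    unfolding extrinsic_rolling_def
  proof (intro conjI ballI allI impI)
    fix t assume "t \<in> I"
    show "roll_beta X xi t \<in> stiefel_tangent X" by (rule beta_tan[OF X sk1 sk2])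
    show "roll_beta_hat X xi t \<in> stiefel" by (simp add: bh Phi_stiefel[OF og X])
    show "lin_isometry euclid_metric (stiefel_tangent X) (stiefel_tangent (roll_beta_hat X xi t)) (roll_B X xi t)"
      unfolding bh by (rule lin_iso_cong[OF BT clT T_iso])
    show "lin_isometry euclid_metric (stiefel_normal X) (stiefel_normal (roll_beta_hat X xi t)) (roll_C X xi t)"
      unfolding bh by (rule lin_iso_cong[OF CN clN N_iso])
    show "\<exists>v. (roll_beta X xi has_vector_derivative v) (at t within I) \<and>
              (roll_beta_hat X xi has_vector_derivative roll_B X xi t v) (at t within I)"
      using beta_deriv[OF X sk1 sk2] bh_deriv[OF X sk1 sk2] B_vel[OF X sk1 sk2] by metis
  next
    fix Z :: "real \<Rightarrow> real^'k^'n"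
    assume Z: "\<forall>t\<in>I. Z t \<in> stiefel_tangent X"
    have "tangent_parallel euclid_metric I stiefel_tangent (roll_beta_hat X xi) (\<lambda>t. roll_B X xi t (Z t)) =
          tangent_parallel euclid_metric I stiefel_tangent (\<lambda>t. Phi (gexp t xi) X) (\<lambda>t. FT X xi t (Z t))"
      unfolding bh_fun by (rule tp_cong) (use Z BT in blast)
    also have "\<dots> = tangent_parallel euclid_metric I (\<lambda>_. stiefel_tangent X) (roll_beta X xi) Z"
      by (rule T_par[OF Z])
    finally show "tangent_parallel euclid_metric I stiefel_tangent (roll_beta_hat X xi) (\<lambda>t. roll_B X xi t (Z t)) =
          tangent_parallel euclid_metric I (\<lambda>_. stiefel_tangent X) (roll_beta X xi) Z" .
  next
    fix Z :: "real \<Rightarrow> real^'k^'n"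
    assume Z: "\<forall>t\<in>I. Z t \<in> stiefel_normal X"
    have "tangent_parallel euclid_metric I stiefel_normal (roll_beta_hat X xi) (\<lambda>t. roll_C X xi t (Z t)) =
          tangent_parallel euclid_metric I stiefel_normal (\<lambda>t. Phi (gexp t xi) X) (\<lambda>t. FN X xi t (Z t))"
      unfolding bh_fun by (rule tp_cong) (use Z CN in blast)
    also have "\<dots> = tangent_parallel euclid_metric I (\<lambda>_. stiefel_normal X) (roll_beta X xi) Z"
      by (rule N_par[OF Z])
    finally show "normal_parallel euclid_metric I stiefel_normal (roll_beta_hat X xi) (\<lambda>t. roll_C X xi t (Z t)) =
          normal_parallel euclid_metric I (\<lambda>_. stiefel_normal X) (roll_beta X xi) Z"
      by (simp add: normal_parallel_eq)
  qed
qed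


end
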